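(* Let $R>0$, let $V$ be as below, and let $\overline{\phi}:B^2(R)\to\mathbb{R}$ be a smooth bounded function, regarded as a $z$-independent function on $X_L$. Define $\mathscr{L}\psi:=\Delta\psi-V''(\overline{\phi})\psi$. Then there exist $L_0>0$ and $c>0$, independent of $L$, such that for all $0<L<L_0$ the operator $\mathscr{L}$ is injective on $L^2_{2,\text{boundary}-0,\text{mean}-0}(X_L)$ and for all $\psi\in L^2_{2,\text{boundary}-0,\text{mean}-0}(X_L)$, \[ \|\psi\|_{L^2_2}\le c\,\|\mathscr{L}\psi\|_{L^2}. \]
   Context: $S^1_L=[0,L]/\!\sim$ is the circle of length $L$ with coordinate $z$; $X_L=B^2(R)\times S^1_L$ with the flat product metric and flat Laplacian $\Delta$. $V:\mathbb{R}\to\mathbb{R}$ is smooth with $tV'(t)\ge -c_V^2$ and $V''(t)\ge -c_V^2$ for all $t$, for some constant $c_V>0$. $L^p_k$ denotes the Sobolev space with norm $\sum_{i\le k}\|\nabla^i f\|_{L^p}$; "boundary-0" means the closure of compactly supported smooth functions (zero boundary values); "mean-0" means $\int_{\{x\}\times S^1_L}f\,dz=0$ for every $x\in B^2(R)$. *)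

theory Defs
  imports "HOL-Analysis.Analysis"
begin

text \<open>A function on X_L = B^2(R) x S^1_L is represented by a function on R^2 x R; only its
  values on the fundamental domain B^2(R) x [0,L) matter.\<close>

type_synonym pt = "(real \<times> real) \<times> real"

definition dd :: "'a::euclidean_space \<Rightarrow> ('a \<Rightarrow> real) \<Rightarrow> 'a \<Rightarrow> real" where
  "dd v f p = frechet_derivative f (at p) v"

fun iter_dd :: "'a::euclidean_space list \<Rightarrow> ('a \<Rightarrow> real) \<Rightarrow> 'a \<Rightarrow> real" where
  "iter_dd [] f = f"
| "iter_dd (v # vs) f = dd v (iter_dd vs f)"

definition smooth_on :: "'a::euclidean_space set \<Rightarrow> ('a \<Rightarrow> real) \<Rightarrow> bool" where
  "smooth_on S f \<longleftrightarrow> (\<forall>vs. set vs \<subseteq> Basis \<longrightarrow> (\<forall>p\<in>S. iter_dd vs f differentiable (at p)))"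

definition dom_X :: "real \<Rightarrow> real \<Rightarrow> pt set" where
  "dom_X R L = ball 0 R \<times> {0..<L}"

definition test_fun :: "real \<Rightarrow> real \<Rightarrow> (pt \<Rightarrow> real) \<Rightarrow> bool" where
  "test_fun R L \<eta> \<longleftrightarrow> smooth_on UNIV \<eta>
     \<and> (\<forall>x z. \<eta> (x, z + L) = \<eta> (x, z))
     \<and> (\<exists>r<R. \<forall>x z. norm x > r \<longrightarrow> \<eta> (x, z) = 0)"

definition L2norm :: "pt set \<Rightarrow> (pt \<Rightarrow> real) \<Rightarrow> real" where
  "L2norm \<Omega> f = sqrt (LINT p:\<Omega>|lborel. (f p)\<^sup>2)"

definition sqint :: "pt set \<Rightarrow> (pt \<Rightarrow> real) \<Rightarrow> bool" where
  "sqint \<Omega> f \<longleftrightarrow> set_borel_measurable lborel \<Omega> f \<and> set_integrable lborel \<Omega> (\<lambda>p. (f p)\<^sup>2)"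

text \<open>L^2_2 norm  ||f|| + ||\<nabla>f|| + ||\<nabla>^2 f||, where g1 b is the derivative of f in
  direction b and g2 b b' the second derivative in directions b, b'.\<close>
definition sob2_norm :: "pt set \<Rightarrow> (pt \<Rightarrow> real) \<Rightarrow> (pt \<Rightarrow> pt \<Rightarrow> real)
      \<Rightarrow> (pt \<Rightarrow> pt \<Rightarrow> pt \<Rightarrow> real) \<Rightarrow> real" where
  "sob2_norm \<Omega> f g1 g2 = L2norm \<Omega> f
     + sqrt (LINT p:\<Omega>|lborel. (\<Sum>b\<in>Basis. (g1 b p)\<^sup>2))
     + sqrt (LINT p:\<Omega>|lborel. (\<Sum>b\<in>Basis. \<Sum>b'\<in>Basis. (g2 b b' p)\<^sup>2))"

definition weak_derivs :: "real \<Rightarrow> real \<Rightarrow> (pt \<Rightarrow> real) \<Rightarrow> (pt \<Rightarrow> pt \<Rightarrow> real)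
      \<Rightarrow> (pt \<Rightarrow> pt \<Rightarrow> pt \<Rightarrow> real) \<Rightarrow> bool" where
  "weak_derivs R L \<psi> g1 g2 \<longleftrightarrow>
     sqint (dom_X R L) \<psi>
     \<and> (\<forall>b\<in>Basis. sqint (dom_X R L) (g1 b))
     \<and> (\<forall>b\<in>Basis. \<forall>b'\<in>Basis. sqint (dom_X R L) (g2 b b'))
     \<and> (\<forall>\<eta>. test_fun R L \<eta> \<longrightarrow>
          (\<forall>b\<in>Basis. (LINT p:dom_X R L|lborel. \<psi> p * dd b \<eta> p)
                       = - (LINT p:dom_X R L|lborel. g1 b p * \<eta> p))
        \<and> (\<forall>b\<in>Basis. \<forall>b'\<in>Basis. (LINT p:dom_X R L|lborel. \<psi> p * dd b (dd b' \<eta>) p)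
                       = (LINT p:dom_X R L|lborel. g2 b b' p * \<eta> p)))"

text \<open>\<psi> (with weak derivatives g1, g2) lies in L^2_{2,boundary-0,mean-0}(X_L):
  it is an L^2_2-limit of smooth compactly supported functions, and its z-means vanish.\<close>
definition in_H :: "real \<Rightarrow> real \<Rightarrow> (pt \<Rightarrow> real) \<Rightarrow> (pt \<Rightarrow> pt \<Rightarrow> real)
      \<Rightarrow> (pt \<Rightarrow> pt \<Rightarrow> pt \<Rightarrow> real) \<Rightarrow> bool" where
  "in_H R L \<psi> g1 g2 \<longleftrightarrow>
     weak_derivs R L \<psi> g1 g2
     \<and> (\<exists>\<phi> :: nat \<Rightarrow> pt \<Rightarrow> real. (\<forall>n. test_fun R L (\<phi> n))
          \<and> (\<lambda>n. sob2_norm (dom_X R L) (\<lambda>p. \<phi> n p - \<psi> p) (\<lambda>b p. dd b (\<phi> n) p - g1 b p)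
                   (\<lambda>b b' p. dd b (dd b' (\<phi> n)) p - g2 b b' p)) \<longlonglongrightarrow> 0)
     \<and> (AE x in lborel. x \<in> ball 0 R \<longrightarrow> (LINT z=0..L|lborel. \<psi> (x, z)) = 0)"

definition Lop :: "(real \<Rightarrow> real) \<Rightarrow> (real \<times> real \<Rightarrow> real) \<Rightarrow> (pt \<Rightarrow> real)
      \<Rightarrow> (pt \<Rightarrow> pt \<Rightarrow> pt \<Rightarrow> real) \<Rightarrow> pt \<Rightarrow> real" where
  "Lop V \<phi>bar \<psi> g2 p = (\<Sum>b\<in>Basis. g2 b b p) - deriv (deriv V) (\<phi>bar (fst p)) * \<psi> p"

end

theory Submission
  imports Defs
begin

lemma Basis_pt: "(Basis :: pt set) = {((1,0),0), ((0,1),0), ((0,0),1)}"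
  by (auto simp: Basis_prod_def zero_prod_def)
lemma dd_line:
  fixes f :: "'a::euclidean_space \<Rightarrow> real"
  assumes "f differentiable (at (p + t *\<^sub>R v))"
  shows "((\<lambda>s. f (p + s *\<^sub>R v)) has_real_derivative dd v f (p + t *\<^sub>R v)) (at t)"
proof -
  have D: "(f has_derivative frechet_derivative f (at (p + t *\<^sub>R v))) (at (p + t *\<^sub>R v))"
    using assms frechet_derivative_works by blast
  have L: "((\<lambda>s. p + s *\<^sub>R v) has_derivative (\<lambda>s. s *\<^sub>R v)) (at t)"
    by (auto intro!: derivative_eq_intros)
  have "((\<lambda>s. f (p + s *\<^sub>R v)) has_derivative (\<lambda>s. frechet_derivative f (at (p + t *\<^sub>R v)) (s *\<^sub>R v))) (at t)"
    using has_derivative_compose[OF L D] by (simp add: o_def)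
  moreover have "(\<lambda>s. frechet_derivative f (at (p + t *\<^sub>R v)) (s *\<^sub>R v)) = (\<lambda>s. dd v f (p + t *\<^sub>R v) * s)"
    using D has_derivative_linear linear_scale unfolding dd_def by (fastforce simp: linear_cmul)
  ultimately show ?thesis by (simp add: has_field_derivative_def)
qed

lemma mixed_step:
  fixes f :: "'a::euclidean_space \<Rightarrow> real"
  assumes f: "\<forall>q. f differentiable (at q)" and fu: "\<forall>q. dd u f differentiable (at q)"
    and h: "h > 0"
  shows "\<exists>\<xi> \<eta>. 0 < \<xi> \<and> \<xi> < h \<and> 0 < \<eta> \<and> \<eta> < h \<and>
     f (p + h *\<^sub>R u + h *\<^sub>R v) - f (p + h *\<^sub>R u) - f (p + h *\<^sub>R v) + f p
       = h * h * dd v (dd u f) (p + \<xi> *\<^sub>R u + \<eta> *\<^sub>R v)"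
proof -
  define k where "k s = f (p + s *\<^sub>R u + h *\<^sub>R v) - f (p + s *\<^sub>R u)" for s
  define k' where "k' s = dd u f (p + s *\<^sub>R u + h *\<^sub>R v) - dd u f (p + s *\<^sub>R u)" for s
  have "DERIV k s :> k' s" for s
  proof -
    have 1: "((\<lambda>s. f ((p + h *\<^sub>R v) + s *\<^sub>R u)) has_real_derivative dd u f ((p + h *\<^sub>R v) + s *\<^sub>R u)) (at s)"
      by (rule dd_line) (use f in auto)
    have 2: "((\<lambda>s. f (p + s *\<^sub>R u)) has_real_derivative dd u f (p + s *\<^sub>R u)) (at s)"
      by (rule dd_line) (use f in auto)
    have e: "\<And>s. (p + h *\<^sub>R v) + s *\<^sub>R u = p + s *\<^sub>R u + h *\<^sub>R v" by (simp add: algebra_simps)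
    show ?thesis unfolding k_def k'_def using DERIV_diff[OF 1 2] by (simp add: e)
  qed
  then obtain \<xi> where \<xi>: "0 < \<xi>" "\<xi> < h" "k h - k 0 = (h - 0) * k' \<xi>"
    using MVT2[of 0 h k k'] h by auto
  define l where "l t = dd u f (p + \<xi> *\<^sub>R u + t *\<^sub>R v)" for t
  have "DERIV l t :> dd v (dd u f) (p + \<xi> *\<^sub>R u + t *\<^sub>R v)" for t
    unfolding l_def by (rule dd_line) (use fu in auto)
  then obtain \<eta> where \<eta>: "0 < \<eta>" "\<eta> < h" "l h - l 0 = (h - 0) * dd v (dd u f) (p + \<xi> *\<^sub>R u + \<eta> *\<^sub>R v)"
    using MVT2[of 0 h l "\<lambda>t. dd v (dd u f) (p + \<xi> *\<^sub>R u + t *\<^sub>R v)"] h by auto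
  have "k' \<xi> = l h - l 0" unfolding k'_def l_def by simp
  then show ?thesis using \<xi> \<eta> unfolding k_def by (intro exI[of _ \<xi>] exI[of _ \<eta>]) (auto simp: algebra_simps)
qed

lemma three_lemma: fixes x y a b :: real
  assumes "\<bar>x - a\<bar> < \<bar>a - b\<bar> / 3" "\<bar>y - b\<bar> < \<bar>a - b\<bar> / 3" "x = y" shows False
  using assms by (auto simp: abs_if split: if_split_asm)

lemma clairaut:
  fixes f :: "'a::euclidean_space \<Rightarrow> real"
  assumes f: "\<forall>q. f differentiable (at q)" and fu: "\<forall>q. dd u f differentiable (at q)"
    and fv: "\<forall>q. dd v f differentiable (at q)"
    and fuv: "\<forall>q. dd v (dd u f) differentiable (at q)" and fvu: "\<forall>q. dd u (dd v f) differentiable (at q)"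
  shows "dd v (dd u f) p = dd u (dd v f) p"
proof (rule ccontr)
  let ?G1 = "dd v (dd u f)" and ?G2 = "dd u (dd v f)"
  assume ne: "?G1 p \<noteq> ?G2 p"
  define e where "e = \<bar>?G1 p - ?G2 p\<bar> / 3"
  have e: "e > 0" using ne by (simp add: e_def)
  have c1: "continuous (at p) ?G1" using fuv differentiable_imp_continuous_within by blast
  have c2: "continuous (at p) ?G2" using fvu differentiable_imp_continuous_within by blast
  obtain d1 where d1: "d1 > 0" "\<And>q. dist q p < d1 \<Longrightarrow> dist (?G1 q) (?G1 p) < e"
    using c1 e unfolding continuous_at_eps_delta by blast
  obtain d2 where d2: "d2 > 0" "\<And>q. dist q p < d2 \<Longrightarrow> dist (?G2 q) (?G2 p) < e"
    using c2 e unfolding continuous_at_eps_delta by blast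
  define d where "d = min d1 d2"
  define h where "h = d / (2 * (norm u + norm v + 1))"
  have d: "d > 0" using d1 d2 by (simp add: d_def)
  have pos: "2 * (norm u + norm v + 1) > 0" by (smt (verit) norm_ge_zero)
  have h: "h > 0" unfolding h_def using d pos by (rule divide_pos_pos)
  have close: "dist (p + a *\<^sub>R u + b *\<^sub>R v) p < d" if "0 < a" "a < h" "0 < b" "b < h" for a b
  proof -
    have "dist (p + a *\<^sub>R u + b *\<^sub>R v) p = norm (a *\<^sub>R u + b *\<^sub>R v)" by (simp add: dist_norm)
    also have "\<dots> \<le> a * norm u + b * norm v" using that
      by (metis (no_types, lifting) abs_of_pos norm_scaleR norm_triangle_ineq)
    also have "\<dots> \<le> h * norm u + h * norm v" using that by (intro add_mono mult_right_mono) auto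
    also have "\<dots> < h * (2 * (norm u + norm v + 1))"
    proof -
      have "h * norm u \<ge> 0" "h * norm v \<ge> 0" using h by auto
      moreover have "h * (2 * (norm u + norm v + 1)) = 2*(h * norm u) + 2*(h * norm v) + 2*h"
        by (simp add: algebra_simps)
      ultimately show ?thesis using h by linarith
    qed
    also have "\<dots> = d" unfolding h_def using pos by simp
    finally show ?thesis .
  qed
  obtain a1 b1 where ab1: "0 < a1" "a1 < h" "0 < b1" "b1 < h"
    "f (p + h *\<^sub>R u + h *\<^sub>R v) - f (p + h *\<^sub>R u) - f (p + h *\<^sub>R v) + f p = h * h * ?G1 (p + a1 *\<^sub>R u + b1 *\<^sub>R v)"
    using mixed_step[OF f fu h, of p v] by blast
  obtain a2 b2 where ab2: "0 < a2" "a2 < h" "0 < b2" "b2 < h"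
    "f (p + h *\<^sub>R v + h *\<^sub>R u) - f (p + h *\<^sub>R v) - f (p + h *\<^sub>R u) + f p = h * h * ?G2 (p + a2 *\<^sub>R v + b2 *\<^sub>R u)"
    using mixed_step[OF f fv h, of p u] by blast
  have ee: "p + h *\<^sub>R v + h *\<^sub>R u = p + h *\<^sub>R u + h *\<^sub>R v" by (simp add: algebra_simps)
  have "h * h * ?G1 (p + a1 *\<^sub>R u + b1 *\<^sub>R v) = h * h * ?G2 (p + a2 *\<^sub>R v + b2 *\<^sub>R u)"
    using ab1(5) ab2(5)[unfolded ee] by linarith
  then have eq: "?G1 (p + a1 *\<^sub>R u + b1 *\<^sub>R v) = ?G2 (p + a2 *\<^sub>R v + b2 *\<^sub>R u)" using h by simp
  have "dist (?G1 (p + a1 *\<^sub>R u + b1 *\<^sub>R v)) (?G1 p) < e"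
    using d1(2) close[OF ab1(1-4)] by (simp add: d_def)
  moreover have "dist (?G2 (p + a2 *\<^sub>R v + b2 *\<^sub>R u)) (?G2 p) < e"
    using d2(2) close[OF ab2(3,4,1,2)] by (simp add: d_def algebra_simps)
  ultimately show False using eq three_lemma unfolding e_def dist_real_def by blast
qed


lemma iter_dd_append: "iter_dd (vs @ [b]) f = iter_dd vs (dd b f)"
  by (induction vs) auto

lemma diff_cont: "(\<forall>p. F differentiable (at p)) \<Longrightarrow> continuous_on S F"
  by (meson differentiable_at_imp_differentiable_on differentiable_imp_continuous_on)

lemma test_diff: "test_fun R L \<eta> \<Longrightarrow> set vs \<subseteq> Basis \<Longrightarrow> iter_dd vs \<eta> differentiable (at p)"
  unfolding test_fun_def smooth_on_def by blast

lemma test_diff0: "test_fun R L \<eta> \<Longrightarrow> \<eta> differentiable (at p)"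
  using test_diff[of R L \<eta> "[]"] by simp

lemma test_cont: "test_fun R L \<eta> \<Longrightarrow> continuous_on S \<eta>"
  using test_diff0 diff_cont by blast

lemma dd_zero_open:
  fixes \<eta> :: "'a::euclidean_space \<Rightarrow> real"
  assumes "open S" "p \<in> S" "\<forall>q\<in>S. \<eta> q = 0"
  shows "dd b \<eta> p = 0"
proof -
  have "((\<lambda>_. 0) has_derivative (\<lambda>_. 0)) (at p)" by simp
  then have "(\<eta> has_derivative (\<lambda>_. 0)) (at p)"
    by (rule has_derivative_transform_within_open[OF _ assms(1,2)]) (use assms(3) in auto)
  then show ?thesis unfolding dd_def using frechet_derivative_at by metis
qed

lemma dd_support:
  fixes \<eta> :: "pt \<Rightarrow> real"
  assumes "\<forall>x z. norm x > r \<longrightarrow> \<eta> (x, z) = 0" "norm x > r"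
  shows "dd b \<eta> (x, z) = 0"
proof (rule dd_zero_open)
  show "open {q::pt. r < norm (fst q)}"
    by (intro open_Collect_less continuous_intros)
qed (use assms in auto)

lemma dd_periodic:
  fixes \<eta> :: "pt \<Rightarrow> real"
  assumes per: "\<forall>x z. \<eta> (x, z + L) = \<eta> (x, z)" and d: "\<forall>p. \<eta> differentiable (at p)"
  shows "dd b \<eta> (x, z + L) = dd b \<eta> (x, z)"
proof -
  define c :: pt where "c = (0, L)"
  have eq: "(\<lambda>q. \<eta> (q + c)) = \<eta>"
    by (rule ext) (auto simp: c_def per)
  let ?F = "frechet_derivative \<eta> (at ((x, z) + c))"
  have D: "(\<eta> has_derivative ?F) (at ((x, z) + c))" using d frechet_derivative_works by blast
  have T: "((\<lambda>q. q + c) has_derivative (\<lambda>q. q)) (at (x, z))"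
    by (auto intro!: derivative_eq_intros)
  have "((\<lambda>q. \<eta> (q + c)) has_derivative ?F) (at (x, z))"
    using has_derivative_compose[OF T D] by (simp add: o_def)
  then have "(\<eta> has_derivative ?F) (at (x, z))" by (simp add: eq)
  then have "?F = frechet_derivative \<eta> (at (x, z))" by (rule frechet_derivative_at)
  then show ?thesis unfolding dd_def by (simp add: c_def)
qed

lemma test_dd:
  assumes t: "test_fun R L \<eta>" and b: "b \<in> Basis"
  shows "test_fun R L (dd b \<eta>)"
  unfolding test_fun_def
proof (intro conjI)
  show "smooth_on UNIV (dd b \<eta>)"
    unfolding smooth_on_def
  proof (intro allI impI ballI)
    fix vs :: "pt list" and p assume "set vs \<subseteq> Basis"
    then have "iter_dd (vs @ [b]) \<eta> differentiable (at p)" using test_diff[OF t] b by auto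
    then show "iter_dd vs (dd b \<eta>) differentiable (at p)" by (simp add: iter_dd_append)
  qed
  show "\<forall>x z. dd b \<eta> (x, z + L) = dd b \<eta> (x, z)"
    using dd_periodic t test_diff0 unfolding test_fun_def by blast
  obtain r where "r < R" "\<forall>x z. norm x > r \<longrightarrow> \<eta> (x, z) = 0" using t unfolding test_fun_def by blast
  then show "\<exists>r<R. \<forall>x z. r < norm x \<longrightarrow> dd b \<eta> (x, z) = 0"
    using dd_support by blast
qed

lemma test_iter: "test_fun R L \<eta> \<Longrightarrow> set vs \<subseteq> Basis \<Longrightarrow> test_fun R L (iter_dd vs \<eta>)"
  by (induction vs) (auto intro: test_dd)


lemma null_L: "{p::pt. snd p = L} \<in> null_sets lborel"
proof -
  have "(UNIV::(real\<times>real) set) \<times> {L} \<in> null_sets (lborel \<Otimes>\<^sub>M lborel)"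
    by (rule lborel.times_in_null_sets2) auto
  moreover have "{p::pt. snd p = L} = UNIV \<times> {L}" by auto
  ultimately show ?thesis by (simp add: lborel_prod)
qed

lemma dom_borel: "dom_X R L \<in> sets borel"
  unfolding dom_X_def by (intro borel_Times) auto

lemma dom_lborel[measurable]: "dom_X R L \<in> sets lborel"
  using dom_borel by simp

lemma cont_meas: "continuous_on UNIV (F::'a::euclidean_space \<Rightarrow> real) \<Longrightarrow> F \<in> borel_measurable lborel"
  using borel_measurable_continuous_onI by (simp add: measurable_lborel1)

definition KK :: "real \<Rightarrow> real \<Rightarrow> pt set" where
  "KK R L = cbox ((-R,-R),0) ((R,R),L)"

lemma KK_lborel[measurable]: "KK R L \<in> sets lborel"
  unfolding KK_def by simp

lemma conv:
  fixes F :: "pt \<Rightarrow> real"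
  assumes cont: "continuous_on UNIV F" and r: "r < R"
    and van: "\<forall>x z. norm x > r \<longrightarrow> F (x,z) = 0"
  shows "set_integrable lborel (dom_X R L) F"
    and "(LINT p:dom_X R L|lborel. F p) = integral (KK R L) F"
proof -
  have iK: "set_integrable lborel (KK R L) F"
    unfolding set_integrable_def KK_def
    using borel_integrable_compact[OF compact_cbox continuous_on_subset[OF cont]] by simp
  have AE: "AE p in lborel. indicator (dom_X R L) p *\<^sub>R F p = indicator (KK R L) p *\<^sub>R F p"
  proof (rule AE_I'[OF null_L[of L]])
    show "{p \<in> space lborel. \<not> indicator (dom_X R L) p *\<^sub>R F p = indicator (KK R L) p *\<^sub>R F p}
          \<subseteq> {p. snd p = L}"
    proof -
      have eq: "indicator (dom_X R L) (x, z) * F (x, z) = indicator (KK R L) (x, z) * F (x, z)"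
        if zL: "z \<noteq> L" for x :: "real \<times> real" and z :: real
      proof (cases "norm x < R")
        case True
        have "\<bar>fst x\<bar> \<le> norm x" "\<bar>snd x\<bar> \<le> norm x"
          using norm_fst_le[of "fst x" "snd x"] norm_snd_le[of "snd x" "fst x"] by auto
        then have "x \<in> cbox (-R,-R) (R,R)" using True
          by (cases x) (auto simp: cbox_Pair_iff)
        then have "(x,z) \<in> dom_X R L \<longleftrightarrow> (x,z) \<in> KK R L"
          using True zL unfolding dom_X_def KK_def by (auto simp: cbox_Pair_iff)
        then show ?thesis by (simp add: indicator_def)
      next
        case False
        then have "r < norm x" using r by linarith
        then have "F (x,z) = 0" using van by blast
        then show ?thesis by simp
      qed
      show ?thesis using eq by force
    qed
  qed
  show "set_integrable lborel (dom_X R L) F"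
    using iK unfolding set_integrable_def
  proof (rule integrable_cong_AE_imp)
    show "(\<lambda>x. indicat_real (dom_X R L) x *\<^sub>R F x) \<in> borel_measurable lborel"
      using cont_meas[OF cont] by measurable
    show "AE x in lborel. indicat_real (KK R L) x *\<^sub>R F x = indicat_real (dom_X R L) x *\<^sub>R F x"
      using AE by auto
  qed
  have "(LINT p:dom_X R L|lborel. F p) = (LINT p:KK R L|lborel. F p)"
  proof -
    have m1: "(\<lambda>x. indicator (dom_X R L) x *\<^sub>R F x) \<in> borel_measurable lborel"
      using cont_meas[OF cont] by measurable
    have m2: "(\<lambda>x. indicator (KK R L) x *\<^sub>R F x) \<in> borel_measurable lborel"
      using cont_meas[OF cont] by measurable
    show ?thesis unfolding set_lebesgue_integral_def by (rule integral_cong_AE[OF m1 m2 AE])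
  qed
  also have "\<dots> = integral (KK R L) F" using set_borel_integral_eq_integral(2)[OF iK] .
  finally show "(LINT p:dom_X R L|lborel. F p) = integral (KK R L) F" .
qed

lemma ftc1:
  fixes h h' :: "real \<Rightarrow> real"
  assumes "a \<le> b" "\<And>t. DERIV h t :> h' t"
  shows "integral {a..b} h' = h b - h a"
proof -
  have "(h' has_integral (h b - h a)) {a..b}"
    by (rule fundamental_theorem_of_calculus[OF assms(1)])
       (use assms(2) in \<open>auto simp: has_real_derivative_iff_has_vector_derivative[symmetric] intro: has_field_derivative_at_within\<close>)
  then show ?thesis by (rule integral_unique)
qed

lemma line_prod:
  fixes f g :: "'a::euclidean_space \<Rightarrow> real"
  assumes "\<forall>q. f differentiable (at q)" "\<forall>q. g differentiable (at q)"
  shows "DERIV (\<lambda>t. f (p + t *\<^sub>R v) * g (p + t *\<^sub>R v)) t :>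
     dd v f (p + t *\<^sub>R v) * g (p + t *\<^sub>R v) + f (p + t *\<^sub>R v) * dd v g (p + t *\<^sub>R v)"
proof -
  have 1: "DERIV (\<lambda>t. f (p + t *\<^sub>R v)) t :> dd v f (p + t *\<^sub>R v)" by (rule dd_line) (use assms in auto)
  have 2: "DERIV (\<lambda>t. g (p + t *\<^sub>R v)) t :> dd v g (p + t *\<^sub>R v)" by (rule dd_line) (use assms in auto)
  show ?thesis using DERIV_mult[OF 1 2] by (simp add: algebra_simps)
qed

lemma line_e1: "((0::real, x2), z) + t *\<^sub>R (((1::real),(0::real)),(0::real)) = ((t, x2), z)" by simp
lemma line_e2: "((x1::real, 0::real), z) + t *\<^sub>R (((0::real),(1::real)),(0::real)) = ((x1, t), z)" by simp
lemma line_e3: "((x::real\<times>real), (0::real)) + t *\<^sub>R (((0::real),(0::real)),(1::real)) = (x, t)" by (simp add: zero_prod_def)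


lemma test_van: "test_fun R L f \<Longrightarrow> \<exists>r<R. \<forall>x z. norm x > r \<longrightarrow> f (x,z) = 0"
  unfolding test_fun_def by blast

lemma test_allD: "test_fun R L f \<Longrightarrow> \<forall>q. f differentiable (at q)"
  using test_diff0 by blast

lemma test_prod_int:
  assumes "test_fun R L f" "test_fun R L g"
  shows "set_integrable lborel (dom_X R L) (\<lambda>p. f p * g p)"
proof -
  obtain r where r: "r < R" "\<forall>x z. norm x > r \<longrightarrow> f (x,z) = 0" using test_van[OF assms(1)] by blast
  show ?thesis
    by (rule conv(1)[OF _ r(1)]) (use r(2) test_cont[OF assms(1)] test_cont[OF assms(2)] in \<open>auto intro!: continuous_on_mult\<close>)
qed

lemma inner_zero_e3:
  assumes tf: "test_fun R L f" and tg: "test_fun R L g" and L: "0 \<le> L"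
  shows "integral (cbox 0 L) (\<lambda>z. dd (((0,0),1)::pt) f (x,z) * g (x,z) + f (x,z) * dd ((0,0),1) g (x,z)) = 0"
proof -
  let ?b = "(((0::real),(0::real)),(1::real))"
  have "integral {0..L} (\<lambda>t. dd ?b f ((x,0) + t *\<^sub>R ?b) * g ((x,0) + t *\<^sub>R ?b) + f ((x,0) + t *\<^sub>R ?b) * dd ?b g ((x,0) + t *\<^sub>R ?b))
     = f ((x,0) + L *\<^sub>R ?b) * g ((x,0) + L *\<^sub>R ?b) - f ((x,0) + 0 *\<^sub>R ?b) * g ((x,0) + 0 *\<^sub>R ?b)"
    by (rule ftc1[OF L]) (rule line_prod[OF test_allD[OF tf] test_allD[OF tg]])
  moreover have "f (x, 0 + L) = f (x, 0)" "g (x, 0 + L) = g (x, 0)"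
    using tf tg unfolding test_fun_def by blast+
  ultimately show ?thesis by (simp only: line_e3 cbox_interval) simp
qed

lemma inner_zero_e2:
  assumes tf: "test_fun R L f" and tg: "test_fun R L g" and R: "R > 0"
  shows "integral (cbox (-R) R) (\<lambda>x2. dd (((0,1),0)::pt) f ((x1,x2),z) * g ((x1,x2),z) + f ((x1,x2),z) * dd ((0,1),0) g ((x1,x2),z)) = 0"
proof -
  let ?b = "(((0::real),(1::real)),(0::real))"
  obtain r where r: "r < R" "\<forall>x z. norm x > r \<longrightarrow> f (x,z) = 0" using test_van[OF tf] by blast
  have "integral {-R..R} (\<lambda>t. dd ?b f (((x1,0),z) + t *\<^sub>R ?b) * g (((x1,0),z) + t *\<^sub>R ?b) + f (((x1,0),z) + t *\<^sub>R ?b) * dd ?b g (((x1,0),z) + t *\<^sub>R ?b))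
     = f (((x1,0),z) + R *\<^sub>R ?b) * g (((x1,0),z) + R *\<^sub>R ?b) - f (((x1,0),z) + (-R) *\<^sub>R ?b) * g (((x1,0),z) + (-R) *\<^sub>R ?b)"
    by (rule ftc1) (use R in simp, rule line_prod[OF test_allD[OF tf] test_allD[OF tg]])
  moreover have "norm (x1, R) > r" "norm (x1, -R) > r"
    using norm_snd_le[of R x1] norm_snd_le[of "-R" x1] r R by auto
  then have "f ((x1, R),z) = 0" "f ((x1, -R),z) = 0" using r by blast+
  ultimately show ?thesis by (simp only: line_e2 cbox_interval)
qed

lemma inner_zero_e1:
  assumes tf: "test_fun R L f" and tg: "test_fun R L g" and R: "R > 0"
  shows "integral (cbox (-R) R) (\<lambda>x1. dd (((1,0),0)::pt) f ((x1,x2),z) * g ((x1,x2),z) + f ((x1,x2),z) * dd ((1,0),0) g ((x1,x2),z)) = 0"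
proof -
  let ?b = "(((1::real),(0::real)),(0::real))"
  obtain r where r: "r < R" "\<forall>x z. norm x > r \<longrightarrow> f (x,z) = 0" using test_van[OF tf] by blast
  have "integral {-R..R} (\<lambda>t. dd ?b f (((0,x2),z) + t *\<^sub>R ?b) * g (((0,x2),z) + t *\<^sub>R ?b) + f (((0,x2),z) + t *\<^sub>R ?b) * dd ?b g (((0,x2),z) + t *\<^sub>R ?b))
     = f (((0,x2),z) + R *\<^sub>R ?b) * g (((0,x2),z) + R *\<^sub>R ?b) - f (((0,x2),z) + (-R) *\<^sub>R ?b) * g (((0,x2),z) + (-R) *\<^sub>R ?b)"
    by (rule ftc1) (use R in simp, rule line_prod[OF test_allD[OF tf] test_allD[OF tg]])
  moreover have "norm (R, x2) > r" "norm (-R, x2) > r"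
    using norm_fst_le[of R x2] norm_fst_le[of "-R" x2] r R by auto
  then have "f ((R, x2),z) = 0" "f ((-R, x2),z) = 0" using r by blast+
  ultimately show ?thesis by (simp only: line_e1 cbox_interval)
qed


lemma ibp_zero:
  assumes tf: "test_fun R L f" and tg: "test_fun R L g" and b: "b \<in> Basis" and L: "0 \<le> L" and R: "R > 0"
  shows "(LINT p:dom_X R L|lborel. dd b f p * g p + f p * dd b g p) = 0"
proof -
  define H where "H p = dd b f p * g p + f p * dd b g p" for p
  obtain r where r: "r < R" "\<forall>x z. norm x > r \<longrightarrow> f (x,z) = 0" using test_van[OF tf] by blast
  have van: "\<forall>x z. norm x > r \<longrightarrow> H (x,z) = 0"
    using r(2) dd_support[OF r(2)] unfolding H_def by auto
  have cont: "continuous_on UNIV H"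
    unfolding H_def using test_cont[OF tf] test_cont[OF tg] test_cont[OF test_dd[OF tf b]] test_cont[OF test_dd[OF tg b]]
    by (auto intro!: continuous_on_add continuous_on_mult)
  have "(LINT p:dom_X R L|lborel. dd b f p * g p + f p * dd b g p) = integral (KK R L) H"
    using conv(2)[OF cont r(1) van] by (simp add: H_def[abs_def])
  also have "\<dots> = 0"
  proof -
    have cK: "continuous_on (cbox ((-R,-R),0) ((R,R),L)) (\<lambda>(x,y). H (x,y))"
      using continuous_on_subset[OF cont] by simp
    have Bs: "b = ((1,0),0) \<or> b = ((0,1),0) \<or> b = ((0,0),1)" using b Basis_pt by auto
    show ?thesis
    proof (cases "b = ((0,0),1)")
      case True
      have "integral (KK R L) H = integral (cbox (-R,-R) (R,R)) (\<lambda>x. integral (cbox 0 L) (\<lambda>z. H (x,z)))"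
        unfolding KK_def by (rule integral_prod_continuous) (rule continuous_on_subset[OF cont], simp)
      also have "\<dots> = integral (cbox (-R,-R) (R,R)) (\<lambda>x. 0)"
        using inner_zero_e3[OF tf tg L] True unfolding H_def by simp
      finally show ?thesis by simp
    next
      case False
      then have b12: "b = ((1,0),0) \<or> b = ((0,1),0)" using Bs by auto
      have "integral (KK R L) H = integral (cbox (-R,-R) (R,R)) (\<lambda>x. integral (cbox 0 L) (\<lambda>z. H (x,z)))"
        unfolding KK_def by (rule integral_prod_continuous) (rule continuous_on_subset[OF cont], simp)
      also have "\<dots> = integral (cbox 0 L) (\<lambda>z. integral (cbox (-R,-R) (R,R)) (\<lambda>x. H (x,z)))"
        by (rule integral_swap_continuous) (use cK in simp)
      also have "\<dots> = integral (cbox 0 L) (\<lambda>z. 0)"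
      proof (rule integral_cong)
        fix z
        have cz: "continuous_on (cbox (-R,-R) (R,R)) (\<lambda>(x1,x2). H ((x1,x2),z))"
          by (rule continuous_on_subset[of UNIV]) (auto intro!: continuous_on_compose2[OF cont] continuous_intros)
        have "integral (cbox (-R,-R) (R,R)) (\<lambda>x. H (x,z))
            = integral (cbox (-R) R) (\<lambda>x1. integral (cbox (-R) R) (\<lambda>x2. H ((x1,x2),z)))"
          by (rule integral_prod_continuous) (use cz in simp)
        also have "\<dots> = 0"
        proof (cases "b = ((0,1),0)")
          case True
          then show ?thesis using inner_zero_e2[OF tf tg R] unfolding H_def by simp
        next
          case False
          then have b1: "b = ((1,0),0)" using b12 by auto
          have "integral (cbox (-R) R) (\<lambda>x1. integral (cbox (-R) R) (\<lambda>x2. H ((x1,x2),z)))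
              = integral (cbox (-R) R) (\<lambda>x2. integral (cbox (-R) R) (\<lambda>x1. H ((x1,x2),z)))"
            by (rule integral_swap_continuous) (use cz in simp)
          also have "\<dots> = 0" using inner_zero_e1[OF tf tg R] b1 unfolding H_def by simp
          finally show ?thesis .
        qed
        finally show "integral (cbox (-R,-R) (R,R)) (\<lambda>x. H (x,z)) = 0" .
      qed
      finally show ?thesis by simp
    qed
  qed
  finally show ?thesis .
qed

lemma ibp:
  assumes tf: "test_fun R L f" and tg: "test_fun R L g" and b: "b \<in> Basis" and L: "0 \<le> L" and R: "R > 0"
  shows "(LINT p:dom_X R L|lborel. dd b f p * g p) = - (LINT p:dom_X R L|lborel. f p * dd b g p)"
proof -
  have i1: "set_integrable lborel (dom_X R L) (\<lambda>p. dd b f p * g p)"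
    by (rule test_prod_int[OF test_dd[OF tf b] tg])
  have i2: "set_integrable lborel (dom_X R L) (\<lambda>p. f p * dd b g p)"
    by (rule test_prod_int[OF tf test_dd[OF tg b]])
  have "(LINT p:dom_X R L|lborel. dd b f p * g p) + (LINT p:dom_X R L|lborel. f p * dd b g p) = 0"
    using ibp_zero[OF assms] set_integral_add(2)[OF i1 i2] by simp
  then show ?thesis by linarith
qed


definition L2 :: "'a measure \<Rightarrow> ('a \<Rightarrow> real) \<Rightarrow> bool" where
  "L2 M f \<longleftrightarrow> f \<in> borel_measurable M \<and> integrable M (\<lambda>x. (f x)\<^sup>2)"

definition ip :: "'a measure \<Rightarrow> ('a \<Rightarrow> real) \<Rightarrow> ('a \<Rightarrow> real) \<Rightarrow> real" where
  "ip M f g = (\<integral>x. f x * g x \<partial>M)"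

lemma L2_meas: "L2 M f \<Longrightarrow> f \<in> borel_measurable M" by (simp add: L2_def)

lemma L2_prod_int:
  assumes "L2 M f" "L2 M g"
  shows "integrable M (\<lambda>x. f x * g x)"
proof (rule Bochner_Integration.integrable_bound)
  show "integrable M (\<lambda>x. (f x)\<^sup>2 + (g x)\<^sup>2)" using assms unfolding L2_def by auto
  show "(\<lambda>x. f x * g x) \<in> borel_measurable M" using assms unfolding L2_def by auto
  show "AE x in M. norm (f x * g x) \<le> norm ((f x)\<^sup>2 + (g x)\<^sup>2)"
  proof (rule AE_I2)
    fix x
    have "2 * \<bar>f x * g x\<bar> \<le> (f x)\<^sup>2 + (g x)\<^sup>2"
      using sum_squares_bound[of "\<bar>f x\<bar>" "\<bar>g x\<bar>"] by (simp add: abs_mult power2_abs)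
    then show "norm (f x * g x) \<le> norm ((f x)\<^sup>2 + (g x)\<^sup>2)" by simp
  qed
qed

lemma L2_add: assumes "L2 M f" "L2 M g" shows "L2 M (\<lambda>x. f x + g x)"
proof -
  have eq: "(\<lambda>x. (f x + g x)\<^sup>2) = (\<lambda>x. (f x)\<^sup>2 + (g x)\<^sup>2 + 2 * (f x * g x))"
    by (rule ext) (simp add: power2_sum mult.assoc)
  have "integrable M (\<lambda>x. (f x)\<^sup>2 + (g x)\<^sup>2 + 2 * (f x * g x))"
    using assms L2_prod_int[OF assms] unfolding L2_def by (auto intro!: Bochner_Integration.integrable_add integrable_mult_right)
  then show ?thesis using assms unfolding L2_def eq by auto
qed

lemma L2_cmult: "L2 M f \<Longrightarrow> L2 M (\<lambda>x. c * f x)"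
  unfolding L2_def by (auto simp: power_mult_distrib intro!: integrable_mult_right)

lemma L2_minus: "L2 M f \<Longrightarrow> L2 M (\<lambda>x. - f x)"
  using L2_cmult[of M f "-1"] by simp

lemma L2_diff: "L2 M f \<Longrightarrow> L2 M g \<Longrightarrow> L2 M (\<lambda>x. f x - g x)"
  using L2_add[of M f "\<lambda>x. - g x"] L2_minus[of M g] by simp

lemma L2_zero: "L2 M (\<lambda>x. 0)"
  unfolding L2_def by simp

lemma L2_sum: "finite I \<Longrightarrow> (\<And>i. i \<in> I \<Longrightarrow> L2 M (f i)) \<Longrightarrow> L2 M (\<lambda>x. \<Sum>i\<in>I. f i x)"
proof (induction I rule: finite_induct)
  case empty then show ?case using L2_zero by simp
next
  case (insert i I)
  then show ?case using L2_add[of M "f i" "\<lambda>x. \<Sum>i\<in>I. f i x"] by simp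
qed

lemma L2_bmult:
  assumes f: "L2 M f" and W: "W \<in> borel_measurable M" and b: "\<And>x. \<bar>W x\<bar> \<le> C"
  shows "L2 M (\<lambda>x. W x * f x)"
  unfolding L2_def
proof
  show "(\<lambda>x. W x * f x) \<in> borel_measurable M" using f W unfolding L2_def by auto
  show "integrable M (\<lambda>x. (W x * f x)\<^sup>2)"
  proof (rule Bochner_Integration.integrable_bound)
    show "integrable M (\<lambda>x. C\<^sup>2 * (f x)\<^sup>2)" using f unfolding L2_def by auto
    show "(\<lambda>x. (W x * f x)\<^sup>2) \<in> borel_measurable M" using f W unfolding L2_def by auto
    show "AE x in M. norm ((W x * f x)\<^sup>2) \<le> norm (C\<^sup>2 * (f x)\<^sup>2)"
    proof (rule AE_I2)
      fix x
      have "(W x)\<^sup>2 \<le> C\<^sup>2" using b[of x] by (metis abs_le_square_iff abs_of_nonneg abs_ge_zero order_trans)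
      then have "(W x)\<^sup>2 * (f x)\<^sup>2 \<le> C\<^sup>2 * (f x)\<^sup>2" by (rule mult_right_mono) simp
      then show "norm ((W x * f x)\<^sup>2) \<le> norm (C\<^sup>2 * (f x)\<^sup>2)" by (simp add: power_mult_distrib)
    qed
  qed
qed

lemma ip_add_left: "L2 M f \<Longrightarrow> L2 M g \<Longrightarrow> L2 M h \<Longrightarrow> ip M (\<lambda>x. f x + g x) h = ip M f h + ip M g h"
  unfolding ip_def using L2_prod_int[of M f h] L2_prod_int[of M g h] by (simp add: distrib_right)

lemma ip_diff_left: "L2 M f \<Longrightarrow> L2 M g \<Longrightarrow> L2 M h \<Longrightarrow> ip M (\<lambda>x. f x - g x) h = ip M f h - ip M g h"
  unfolding ip_def using L2_prod_int[of M f h] L2_prod_int[of M g h] by (simp add: left_diff_distrib)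

lemma ip_comm: "ip M f g = ip M g f"
  unfolding ip_def by (simp add: mult.commute)

lemma ip_diff_right: "L2 M f \<Longrightarrow> L2 M g \<Longrightarrow> L2 M h \<Longrightarrow> ip M h (\<lambda>x. f x - g x) = ip M h f - ip M h g"
  using ip_diff_left[of M f g h] by (simp add: ip_comm)

lemma ip_add_right: "L2 M f \<Longrightarrow> L2 M g \<Longrightarrow> L2 M h \<Longrightarrow> ip M h (\<lambda>x. f x + g x) = ip M h f + ip M h g"
  using ip_add_left[of M f g h] by (simp add: ip_comm)

lemma ip_cmult_left: "ip M (\<lambda>x. c * f x) g = c * ip M f g"
  unfolding ip_def by (simp add: mult.assoc)

lemma ip_sum_right: "finite I \<Longrightarrow> L2 M h \<Longrightarrow> (\<And>i. i \<in> I \<Longrightarrow> L2 M (f i)) \<Longrightarrow>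
    ip M h (\<lambda>x. \<Sum>i\<in>I. f i x) = (\<Sum>i\<in>I. ip M h (f i))"
proof (induction I rule: finite_induct)
  case empty then show ?case by (simp add: ip_def)
next
  case (insert i I)
  then show ?case using ip_add_right[of M "f i" "\<lambda>x. \<Sum>i\<in>I. f i x" h] L2_sum[of I M f] by simp
qed

lemma ip_sum_left: "finite I \<Longrightarrow> L2 M h \<Longrightarrow> (\<And>i. i \<in> I \<Longrightarrow> L2 M (f i)) \<Longrightarrow>
    ip M (\<lambda>x. \<Sum>i\<in>I. f i x) h = (\<Sum>i\<in>I. ip M (f i) h)"
  using ip_sum_right[of I M h f] by (simp add: ip_comm)

lemma ip_nonneg: "ip M f f \<ge> 0"
  unfolding ip_def by simp

lemma quad_disc:
  fixes a b c :: real
  assumes "\<And>t. 0 \<le> a - 2 * t * b + t\<^sup>2 * c" and c0: "c \<ge> 0"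
  shows "b\<^sup>2 \<le> a * c"
proof (cases "c = 0")
  case True
  show ?thesis
  proof (cases "b = 0")
    case False
    have "0 \<le> a - 2 * ((a + 1) / (2 * b)) * b" using assms(1)[of "(a + 1) / (2 * b)"] True by simp
    also have "\<dots> = -1" using False by (simp add: field_simps)
    finally show ?thesis by simp
  qed (use True assms(1)[of 0] in simp)
next
  case False
  have "0 \<le> a - 2 * (b / c) * b + (b / c)\<^sup>2 * c" by (rule assms(1))
  also have "\<dots> = a - b\<^sup>2 / c" using False by (simp add: field_simps power2_eq_square)
  finally have "b\<^sup>2 / c \<le> a" by simp
  then show ?thesis using False c0 by (simp add: field_simps mult.commute)
qed


lemma ip_quad:
  assumes f: "L2 M f" and g: "L2 M g"
  shows "ip M (\<lambda>x. f x - t * g x) (\<lambda>x. f x - t * g x) = ip M f f - 2 * t * ip M f g + t\<^sup>2 * ip M g g"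
proof -
  have tg: "L2 M (\<lambda>x. t * g x)" using L2_cmult[OF g] .
  have d: "L2 M (\<lambda>x. f x - t * g x)" using L2_diff[OF f tg] .
  have "ip M (\<lambda>x. f x - t * g x) (\<lambda>x. f x - t * g x) = ip M f (\<lambda>x. f x - t * g x) - ip M (\<lambda>x. t * g x) (\<lambda>x. f x - t * g x)"
    by (rule ip_diff_left[OF f tg d])
  also have "\<dots> = (ip M f f - ip M f (\<lambda>x. t * g x)) - (ip M (\<lambda>x. t * g x) f - ip M (\<lambda>x. t * g x) (\<lambda>x. t * g x))"
    using ip_diff_right[OF f tg f] ip_diff_right[OF f tg tg] by simp
  also have "\<dots> = ip M f f - 2 * t * ip M f g + t\<^sup>2 * ip M g g"
    using ip_cmult_left[of M t g f] ip_cmult_left[of M t g "\<lambda>x. t * g x"] ip_comm[of M f "\<lambda>x. t * g x"]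
      ip_comm[of M "g" "\<lambda>x. t * g x"] ip_cmult_left[of M t g g] ip_comm[of M f g]
    by (simp add: power2_eq_square algebra_simps)
  finally show ?thesis .
qed

lemma ip_CS:
  assumes f: "L2 M f" and g: "L2 M g"
  shows "(ip M f g)\<^sup>2 \<le> ip M f f * ip M g g"
proof (rule quad_disc)
  fix t
  show "0 \<le> ip M f f - 2 * t * ip M f g + t\<^sup>2 * ip M g g"
    using ip_quad[OF f g, of t] ip_nonneg[of M "\<lambda>x. f x - t * g x"] by simp
qed (rule ip_nonneg)

definition nrm :: "'a measure \<Rightarrow> ('a \<Rightarrow> real) \<Rightarrow> real" where
  "nrm M f = sqrt (ip M f f)"

lemma nrm_nonneg: "nrm M f \<ge> 0" unfolding nrm_def using ip_nonneg by simp

lemma nrm_sq: "(nrm M f)\<^sup>2 = ip M f f" unfolding nrm_def using ip_nonneg by simp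

lemma ip_abs_le:
  assumes f: "L2 M f" and g: "L2 M g"
  shows "\<bar>ip M f g\<bar> \<le> nrm M f * nrm M g"
proof -
  have "\<bar>ip M f g\<bar> = sqrt ((ip M f g)\<^sup>2)" by simp
  also have "\<dots> \<le> sqrt (ip M f f * ip M g g)" using ip_CS[OF f g] by (rule real_sqrt_le_mono)
  also have "\<dots> = nrm M f * nrm M g" unfolding nrm_def by (simp add: real_sqrt_mult)
  finally show ?thesis .
qed

lemma nrm_triangle:
  assumes f: "L2 M f" and g: "L2 M g"
  shows "nrm M (\<lambda>x. f x + g x) \<le> nrm M f + nrm M g"
proof -
  have fg: "L2 M (\<lambda>x. f x + g x)" using L2_add[OF f g] .
  have "ip M (\<lambda>x. f x + g x) (\<lambda>x. f x + g x) = ip M f f + 2 * ip M f g + ip M g g"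
    using ip_add_left[OF f g fg] ip_add_right[OF f g f] ip_add_right[OF f g g] ip_comm[of M f g] by simp
  also have "\<dots> \<le> (nrm M f)\<^sup>2 + 2 * (nrm M f * nrm M g) + (nrm M g)\<^sup>2"
    using ip_abs_le[OF f g] by (simp add: nrm_sq)
  also have "\<dots> = (nrm M f + nrm M g)\<^sup>2" by (simp add: power2_sum)
  finally have "(nrm M (\<lambda>x. f x + g x))\<^sup>2 \<le> (nrm M f + nrm M g)\<^sup>2" by (simp add: nrm_sq)
  then show ?thesis using nrm_nonneg[of M f] nrm_nonneg[of M g] by (simp add: power2_le_iff_abs_le)
qed

lemma nrm_triangle_diff:
  assumes f: "L2 M f" and g: "L2 M g"
  shows "nrm M f \<le> nrm M (\<lambda>x. f x - g x) + nrm M g"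
  using nrm_triangle[OF L2_diff[OF f g] g] by simp

lemma ip_tendsto:
  assumes f: "L2 M f" and g: "L2 M g" and F: "\<And>n. L2 M (F n)" and G: "\<And>n. L2 M (G n)"
    and cF: "(\<lambda>n. nrm M (\<lambda>x. F n x - f x)) \<longlonglongrightarrow> 0"
    and cG: "(\<lambda>n. nrm M (\<lambda>x. G n x - g x)) \<longlonglongrightarrow> 0"
  shows "(\<lambda>n. ip M (F n) (G n)) \<longlonglongrightarrow> ip M f g"
proof -
  define b where "b n = nrm M (\<lambda>x. F n x - f x) * (nrm M (\<lambda>x. G n x - g x) + nrm M g) + nrm M f * nrm M (\<lambda>x. G n x - g x)" for n
  have b0: "b \<longlonglongrightarrow> 0"
  proof -
    have "b \<longlonglongrightarrow> 0 * (0 + nrm M g) + nrm M f * 0"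
      unfolding b_def by (intro tendsto_intros cF cG)
    then show ?thesis by simp
  qed
  have "(\<lambda>n. ip M (F n) (G n) - ip M f g) \<longlonglongrightarrow> 0"
  proof (rule Lim_null_comparison[OF _ b0], rule always_eventually, rule allI)
    fix n
    have dF: "L2 M (\<lambda>x. F n x - f x)" using L2_diff[OF F f] .
    have dG: "L2 M (\<lambda>x. G n x - g x)" using L2_diff[OF G g] .
    have "ip M (F n) (G n) - ip M f g = ip M (\<lambda>x. F n x - f x) (G n) + ip M f (\<lambda>x. G n x - g x)"
      using ip_diff_left[OF F f G] ip_diff_right[OF G g f] by simp
    then have "\<bar>ip M (F n) (G n) - ip M f g\<bar> \<le> \<bar>ip M (\<lambda>x. F n x - f x) (G n)\<bar> + \<bar>ip M f (\<lambda>x. G n x - g x)\<bar>"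
      by simp
    also have "\<dots> \<le> nrm M (\<lambda>x. F n x - f x) * nrm M (G n) + nrm M f * nrm M (\<lambda>x. G n x - g x)"
      using ip_abs_le[OF dF G[of n]] ip_abs_le[OF f dG] by (rule add_mono)
    also have "\<dots> \<le> b n"
      unfolding b_def using nrm_triangle_diff[OF G g] nrm_nonneg[of M "\<lambda>x. F n x - f x"]
      by (simp add: mult_left_mono)
    finally show "norm (ip M (F n) (G n) - ip M f g) \<le> b n" by simp
  qed
  then show ?thesis by (rule LIM_zero_cancel)
qed


definition rs :: "'a set \<Rightarrow> ('a \<Rightarrow> real) \<Rightarrow> 'a \<Rightarrow> real" where
  "rs \<Omega> f p = indicator \<Omega> p * f p"

lemma ind_sq: "indicator A x * indicator A x = (indicator A x :: real)"
  by (simp add: indicator_def)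

lemma sqint_L2: "sqint \<Omega> f \<Longrightarrow> L2 lborel (rs \<Omega> f)"
proof -
  assume s: "sqint \<Omega> f"
  have eq: "(\<lambda>x. (rs \<Omega> f x)\<^sup>2) = (\<lambda>x. indicator \<Omega> x *\<^sub>R (f x)\<^sup>2)"
    by (rule ext) (simp add: rs_def indicator_def)
  show ?thesis using s unfolding sqint_def L2_def set_borel_measurable_def set_integrable_def eq
    by (simp add: rs_def[abs_def])
qed

lemma L2_sqint: "L2 lborel (rs \<Omega> f) \<Longrightarrow> sqint \<Omega> f"
proof -
  assume s: "L2 lborel (rs \<Omega> f)"
  have eq: "(\<lambda>x. (rs \<Omega> f x)\<^sup>2) = (\<lambda>x. indicator \<Omega> x *\<^sub>R (f x)\<^sup>2)"
    by (rule ext) (simp add: rs_def indicator_def)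
  show ?thesis using s unfolding sqint_def L2_def set_borel_measurable_def set_integrable_def eq
    by (simp add: rs_def[abs_def])
qed

lemma LINT_ip: "(LINT p:\<Omega>|lborel. f p * g p) = ip lborel (rs \<Omega> f) (rs \<Omega> g)"
  unfolding set_lebesgue_integral_def ip_def rs_def
  by (rule Bochner_Integration.integral_cong) (auto simp: indicator_def)

lemma L2norm_nrm: "L2norm \<Omega> f = nrm lborel (rs \<Omega> f)"
  unfolding L2norm_def nrm_def using LINT_ip[of \<Omega> f f] by (simp add: power2_eq_square)

lemma rs_diff: "rs \<Omega> (\<lambda>p. f p - g p) = (\<lambda>p. rs \<Omega> f p - rs \<Omega> g p)"
  by (rule ext) (simp add: rs_def algebra_simps)

lemma rs_sum: "rs \<Omega> (\<lambda>p. \<Sum>i\<in>I. f i p) = (\<lambda>p. \<Sum>i\<in>I. rs \<Omega> (f i) p)"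
  by (rule ext) (simp add: rs_def sum_distrib_left)

lemma rs_mult: "rs \<Omega> (\<lambda>p. W p * f p) = (\<lambda>p. W p * rs \<Omega> f p)"
  by (rule ext) (simp add: rs_def)

lemma LINT_sum:
  fixes \<Omega> :: "pt set" and F :: "'i \<Rightarrow> pt \<Rightarrow> real"
  assumes "finite I" "\<And>i. i \<in> I \<Longrightarrow> set_integrable lborel \<Omega> (F i)"
  shows "set_integrable lborel \<Omega> (\<lambda>p. \<Sum>i\<in>I. F i p) \<and> (LINT p:\<Omega>|lborel. (\<Sum>i\<in>I. F i p)) = (\<Sum>i\<in>I. LINT p:\<Omega>|lborel. F i p)"
  using assms
proof (induction I rule: finite_induct)
  case empty
  then show ?case by (simp add: set_integrable_def set_lebesgue_integral_def)
next
  case (insert i I)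
  then have a: "set_integrable lborel \<Omega> (F i)" and b: "set_integrable lborel \<Omega> (\<lambda>p. \<Sum>i\<in>I. F i p)"
    and c: "(LINT p:\<Omega>|lborel. (\<Sum>i\<in>I. F i p)) = (\<Sum>i\<in>I. LINT p:\<Omega>|lborel. F i p)" by auto
  show ?case using set_integral_add[OF a b] c insert.hyps by simp
qed

lemma sq_set_int: "sqint \<Omega> f \<Longrightarrow> set_integrable lborel \<Omega> (\<lambda>p. (f p)\<^sup>2)"
  unfolding sqint_def by simp

lemma LINT_sum_sq:
  fixes \<Omega> :: "pt set"
  assumes "finite I" "\<And>i. i \<in> I \<Longrightarrow> sqint \<Omega> (f i)"
  shows "(LINT p:\<Omega>|lborel. (\<Sum>i\<in>I. (f i p)\<^sup>2)) = (\<Sum>i\<in>I. ip lborel (rs \<Omega> (f i)) (rs \<Omega> (f i)))"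
  using LINT_sum[OF assms(1), of \<Omega> "\<lambda>i p. (f i p)\<^sup>2"] sq_set_int[OF assms(2)] LINT_ip[of \<Omega>]
  by (simp add: power2_eq_square)

lemma LINT_sum_sq2:
  fixes \<Omega> :: "pt set"
  assumes "finite I" "\<And>i j. i \<in> I \<Longrightarrow> j \<in> I \<Longrightarrow> sqint \<Omega> (f i j)"
  shows "(LINT p:\<Omega>|lborel. (\<Sum>i\<in>I. \<Sum>j\<in>I. (f i j p)\<^sup>2)) = (\<Sum>i\<in>I. \<Sum>j\<in>I. ip lborel (rs \<Omega> (f i j)) (rs \<Omega> (f i j)))"
proof -
  have inner: "set_integrable lborel \<Omega> (\<lambda>p. \<Sum>j\<in>I. (f i j p)\<^sup>2) \<and>
     (LINT p:\<Omega>|lborel. (\<Sum>j\<in>I. (f i j p)\<^sup>2)) = (\<Sum>j\<in>I. LINT p:\<Omega>|lborel. (f i j p)\<^sup>2)" if "i \<in> I" for i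
    by (rule LINT_sum[OF assms(1)]) (use sq_set_int assms(2) that in blast)
  have "(LINT p:\<Omega>|lborel. (\<Sum>i\<in>I. \<Sum>j\<in>I. (f i j p)\<^sup>2)) = (\<Sum>i\<in>I. LINT p:\<Omega>|lborel. (\<Sum>j\<in>I. (f i j p)\<^sup>2))"
    using LINT_sum[OF assms(1), of \<Omega> "\<lambda>i p. \<Sum>j\<in>I. (f i j p)\<^sup>2"] inner by blast
  also have "\<dots> = (\<Sum>i\<in>I. \<Sum>j\<in>I. LINT p:\<Omega>|lborel. (f i j p)\<^sup>2)" using inner by simp
  also have "\<dots> = (\<Sum>i\<in>I. \<Sum>j\<in>I. ip lborel (rs \<Omega> (f i j)) (rs \<Omega> (f i j)))"
    using LINT_ip[of \<Omega>] by (simp add: power2_eq_square)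
  finally show ?thesis .
qed

lemma test_sqint:
  assumes "test_fun R L f"
  shows "sqint (dom_X R L) f"
  unfolding sqint_def
proof
  show "set_borel_measurable lborel (dom_X R L) f"
    unfolding set_borel_measurable_def using cont_meas[OF test_cont[OF assms]] by measurable
  show "set_integrable lborel (dom_X R L) (\<lambda>p. (f p)\<^sup>2)"
    using test_prod_int[OF assms assms] by (simp add: power2_eq_square)
qed


lemma test_id1:
  assumes t: "test_fun R L \<phi>" and b: "b \<in> Basis" and L: "0 \<le> L" and R: "R > 0"
  shows "ip lborel (rs (dom_X R L) (dd b \<phi>)) (rs (dom_X R L) (dd b \<phi>))
       = - ip lborel (rs (dom_X R L) \<phi>) (rs (dom_X R L) (dd b (dd b \<phi>)))"
  using ibp[OF t test_dd[OF t b] b L R] LINT_ip[of "dom_X R L"] by simp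

lemma test_clairaut:
  assumes t: "test_fun R L \<phi>" and u: "u \<in> Basis" and v: "v \<in> Basis"
  shows "dd v (dd u \<phi>) = dd u (dd v \<phi>)"
proof (rule ext, rule clairaut)
  show "\<forall>q. \<phi> differentiable at q" using test_diff[OF t, of "[]"] by simp
  show "\<forall>q. dd u \<phi> differentiable at q" using test_diff[OF t, of "[u]"] u by simp
  show "\<forall>q. dd v \<phi> differentiable at q" using test_diff[OF t, of "[v]"] v by simp
  show "\<forall>q. dd v (dd u \<phi>) differentiable at q" using test_diff[OF t, of "[v,u]"] u v by simp
  show "\<forall>q. dd u (dd v \<phi>) differentiable at q" using test_diff[OF t, of "[u,v]"] u v by simp
qed

lemma test_id2:
  assumes t: "test_fun R L \<phi>" and b: "b \<in> Basis" and b': "b' \<in> Basis" and L: "0 \<le> L" and R: "R > 0"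
  shows "ip lborel (rs (dom_X R L) (dd b (dd b' \<phi>))) (rs (dom_X R L) (dd b (dd b' \<phi>)))
       = ip lborel (rs (dom_X R L) (dd b (dd b \<phi>))) (rs (dom_X R L) (dd b' (dd b' \<phi>)))"
proof -
  have t1: "test_fun R L (dd b' \<phi>)" using test_dd[OF t b'] .
  have t2: "test_fun R L (dd b (dd b' \<phi>))" using test_dd[OF t1 b] .
  have t3: "test_fun R L (dd b (dd b \<phi>))" using test_dd[OF test_dd[OF t b] b] .
  have c1: "dd b (dd b' \<phi>) = dd b' (dd b \<phi>)" using test_clairaut[OF t b' b] .
  have c2: "dd b (dd b' (dd b \<phi>)) = dd b' (dd b (dd b \<phi>))" using test_clairaut[OF test_dd[OF t b] b' b] .
  have "(LINT p:dom_X R L|lborel. dd b (dd b' \<phi>) p * dd b (dd b' \<phi>) p)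
      = - (LINT p:dom_X R L|lborel. dd b' \<phi> p * dd b (dd b (dd b' \<phi>)) p)"
    using ibp[OF t1 t2 b L R] .
  also have "dd b (dd b (dd b' \<phi>)) = dd b' (dd b (dd b \<phi>))" using c1 c2 by simp
  also have "- (LINT p:dom_X R L|lborel. dd b' \<phi> p * dd b' (dd b (dd b \<phi>)) p)
      = (LINT p:dom_X R L|lborel. dd b' (dd b' \<phi>) p * dd b (dd b \<phi>) p)"
    using ibp[OF t1 t3 b' L R] by simp
  finally show ?thesis using LINT_ip[of "dom_X R L"] ip_comm by metis
qed


lemma sq_split: "(x::real)\<^sup>2 \<le> 2 * y\<^sup>2 + 2 * (x - y)\<^sup>2"
proof -
  have "0 \<le> (x - 2*y)\<^sup>2" by simp
  then show ?thesis by (simp add: power2_eq_square algebra_simps)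
qed

lemma poinc1:
  fixes u u' :: "real \<Rightarrow> real"
  assumes d: "\<And>t. DERIV u t :> u' t" and c': "continuous_on UNIV u'" and L: "L > 0"
  shows "integral {0..L} (\<lambda>t. (u t)\<^sup>2) \<le> 2 * (integral {0..L} u)\<^sup>2 / L + 8 * L\<^sup>2 * integral {0..L} (\<lambda>t. (u' t)\<^sup>2)"
proof -
  have cu: "continuous_on UNIV u"
    using d by (meson DERIV_isCont continuous_at_imp_continuous_on)
  have iu: "(\<lambda>t. u t) integrable_on {a..b}" for a b
    by (rule integrable_continuous_interval) (rule continuous_on_subset[OF cu], simp)
  have iu2: "(\<lambda>t. (u t)\<^sup>2) integrable_on {a..b}" for a b
    by (rule integrable_continuous_interval) (intro continuous_intros continuous_on_subset[OF cu], simp)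
  have iu': "(\<lambda>t. u' t) integrable_on {a..b}" for a b
    by (rule integrable_continuous_interval) (rule continuous_on_subset[OF c'], simp)
  have iau': "(\<lambda>t. \<bar>u' t\<bar>) integrable_on {a..b}" for a b
    by (rule integrable_continuous_interval) (intro continuous_intros continuous_on_subset[OF c'], simp)
  have iu'2: "(\<lambda>t. (u' t)\<^sup>2) integrable_on {a..b}" for a b
    by (rule integrable_continuous_interval) (intro continuous_intros continuous_on_subset[OF c'], simp)
  define J where "J = integral {0..L} (\<lambda>t. \<bar>u' t\<bar>)"
  define J2 where "J2 = integral {0..L} (\<lambda>t. (u' t)\<^sup>2)"
  define a where "a = integral {0..L} u"
  have J0: "J \<ge> 0" unfolding J_def by (rule integral_nonneg[OF iau']) simp
  have osc: "\<bar>u z - u 0\<bar> \<le> J" if z: "z \<in> {0..L}" for z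
  proof -
    have "u z - u 0 = integral {0..z} u'" using ftc1[of 0 z u u'] d z by simp
    also have "\<bar>\<dots>\<bar> \<le> integral {0..z} (\<lambda>t. \<bar>u' t\<bar>)"
      using integral_norm_bound_integral[OF iu' iau', of 0 z] by simp
    also have "\<dots> \<le> J" unfolding J_def
      by (rule integral_subset_le) (use z iau' in auto)
    finally show ?thesis .
  qed
  have "a - L * u 0 = integral {0..L} (\<lambda>t. u t - u 0)"
    unfolding a_def using integral_diff[OF iu integrable_const_ivl[of "u 0" 0 L]] L by simp
  then have "\<bar>a - L * u 0\<bar> \<le> integral {0..L} (\<lambda>t. J)"
    using integral_norm_bound_integral[of "\<lambda>t. u t - u 0" "{0..L}" "\<lambda>t. J"] osc
      integrable_diff[OF iu integrable_const_ivl[of "u 0" 0 L]] integrable_const_ivl[of J 0 L] by simp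
  also have "\<dots> = L * J" using L by simp
  finally have m: "\<bar>a - L * u 0\<bar> \<le> L * J" .
  have m': "\<bar>u 0 - a / L\<bar> \<le> J"
  proof -
    have "\<bar>u 0 - a / L\<bar> = \<bar>a - L * u 0\<bar> / L" using L by (simp add: field_simps abs_minus_commute)
    also have "\<dots> \<le> J" using m L by (simp add: pos_divide_le_eq mult.commute)
    finally show ?thesis .
  qed
  have pt: "(u z)\<^sup>2 \<le> 2 * (a / L)\<^sup>2 + 8 * J\<^sup>2" if z: "z \<in> {0..L}" for z
  proof -
    have "\<bar>u z - a / L\<bar> \<le> 2 * J" using osc[OF z] m' by linarith
    then have "\<bar>u z - a / L\<bar>\<^sup>2 \<le> (2 * J)\<^sup>2" by (rule power_mono) simp
    then have "(u z - a / L)\<^sup>2 \<le> (2 * J)\<^sup>2" by simp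
    then show ?thesis using sq_split[of "u z" "a / L"] by (simp add: power_mult_distrib)
  qed
  have I: "integral {0..L} (\<lambda>t. (u t)\<^sup>2) \<le> integral {0..L} (\<lambda>t. 2 * (a / L)\<^sup>2 + 8 * J\<^sup>2)"
    by (rule integral_le[OF iu2 integrable_const_ivl]) (use pt in auto)
  also have "\<dots> = L * (2 * (a / L)\<^sup>2 + 8 * J\<^sup>2)" using L by simp
  also have "\<dots> = 2 * a\<^sup>2 / L + 8 * L * J\<^sup>2" using L by (simp add: field_simps power2_eq_square)
  finally have I1: "integral {0..L} (\<lambda>t. (u t)\<^sup>2) \<le> 2 * a\<^sup>2 / L + 8 * L * J\<^sup>2" .
  have ic: "(\<lambda>t. (2 * (J / L)) * \<bar>u' t\<bar>) integrable_on {0..L}"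
    by (rule integrable_continuous_interval) (intro continuous_intros continuous_on_subset[OF c'], simp)
  have "0 \<le> integral {0..L} (\<lambda>t. (\<bar>u' t\<bar> - J / L)\<^sup>2)"
    by (rule integral_nonneg) (auto intro!: integrable_continuous_interval continuous_intros continuous_on_subset[OF c'])
  also have "integral {0..L} (\<lambda>t. (\<bar>u' t\<bar> - J / L)\<^sup>2)
      = integral {0..L} (\<lambda>t. (u' t)\<^sup>2 - (2 * (J / L)) * \<bar>u' t\<bar> + (J / L)\<^sup>2)"
    by (rule integral_cong) (simp add: power2_eq_square algebra_simps)
  also have "\<dots> = J2 - (2 * (J / L)) * J + L * (J / L)\<^sup>2"
  proof -
    have "integral {0..L} (\<lambda>t. (u' t)\<^sup>2 - (2 * (J / L)) * \<bar>u' t\<bar> + (J / L)\<^sup>2)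
        = integral {0..L} (\<lambda>t. (u' t)\<^sup>2 - (2 * (J / L)) * \<bar>u' t\<bar>) + integral {0..L} (\<lambda>t. (J / L)\<^sup>2)"
      by (rule integral_add[OF integrable_diff[OF iu'2 ic] integrable_const_ivl])
    also have "integral {0..L} (\<lambda>t. (u' t)\<^sup>2 - (2 * (J / L)) * \<bar>u' t\<bar>)
        = J2 - integral {0..L} (\<lambda>t. (2 * (J / L)) * \<bar>u' t\<bar>)"
      unfolding J2_def by (rule integral_diff[OF iu'2 ic])
    also have "integral {0..L} (\<lambda>t. (2 * (J / L)) * \<bar>u' t\<bar>) = (2 * (J / L)) * J"
      unfolding J_def using integral_cmul[of "{0..L}" "2 * (J/L)" "\<lambda>t. \<bar>u' t\<bar>"] by simp
    finally show ?thesis using L by simp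
  qed
  also have "\<dots> = J2 - J\<^sup>2 / L" using L by (simp add: field_simps power2_eq_square)
  finally have "J\<^sup>2 \<le> L * J2" using L by (simp add: field_simps)
  then have "8 * L * J\<^sup>2 \<le> 8 * L * (L * J2)" using L by simp
  then show ?thesis using I1 unfolding a_def J2_def by (simp add: power2_eq_square algebra_simps)
qed


lemma C1:
  fixes F :: "real \<Rightarrow> real"
  assumes c: "continuous_on UNIV F" and L: "0 \<le> L"
  shows "set_integrable lborel {0<..<L} F" and "(LINT z:{0<..<L}|lborel. F z) = integral {0..L} F"
proof -
  have i: "set_integrable lborel {0..L} F"
    unfolding set_integrable_def using borel_integrable_compact[OF compact_Icc continuous_on_subset[OF c]] by simp
  show si: "set_integrable lborel {0<..<L} F"
    by (rule set_integrable_subset[OF i]) auto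
  show "(LINT z:{0<..<L}|lborel. F z) = integral {0..L} F"
    using set_borel_integral_eq_integral(2)[OF si] integral_open_interval_real[of 0 L F] by simp
qed

lemma C2:
  fixes F :: "real \<Rightarrow> real"
  assumes c: "continuous_on UNIV F" and L: "0 \<le> L" and nn: "\<And>z. F z \<ge> 0"
  shows "(\<integral>\<^sup>+ z. ennreal (indicator {0<..<L} z * F z) \<partial>lborel) = ennreal (integral {0..L} F)"
proof -
  have "(\<integral>\<^sup>+ z. ennreal (indicator {0<..<L} z * F z) \<partial>lborel) = ennreal (\<integral>z. indicator {0<..<L} z * F z \<partial>lborel)"
    by (rule nn_integral_eq_integral) (use C1(1)[OF c L] nn in \<open>auto simp: set_integrable_def\<close>)
  also have "(\<integral>z. indicator {0<..<L} z * F z \<partial>lborel) = integral {0..L} F"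
    using C1(2)[OF c L] by (simp add: set_lebesgue_integral_def)
  finally show ?thesis .
qed

lemma P1nn:
  assumes t: "test_fun R L \<phi>" and L: "L > 0"
  shows "(\<integral>\<^sup>+ z. ennreal (indicator {0<..<L} z * (\<phi> (x,z))\<^sup>2) \<partial>lborel)
    \<le> ennreal (2 * (LINT z:{0<..<L}|lborel. \<phi> (x,z))\<^sup>2 / L)
       + ennreal (8 * L\<^sup>2) * (\<integral>\<^sup>+ z. ennreal (indicator {0<..<L} z * (dd ((0,0),1) \<phi> (x,z))\<^sup>2) \<partial>lborel)"
proof -
  let ?e = "(((0::real),(0::real)),(1::real))"
  define u where "u t = \<phi> (x,t)" for t
  define u' where "u' t = dd ?e \<phi> (x,t)" for t
  have cpair: "continuous_on UNIV (\<lambda>t::real. (x,t))" by (intro continuous_intros)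
  have cu: "continuous_on UNIV u" unfolding u_def
    by (rule continuous_on_compose2[OF test_cont[OF t] cpair]) auto
  have cu': "continuous_on UNIV u'" unfolding u'_def
    by (rule continuous_on_compose2[OF test_cont[OF test_dd[OF t]] cpair]) (auto simp: Basis_pt)
  have d: "DERIV u t :> u' t" for t
    using dd_line[of \<phi> "(x,0)" t ?e] test_diff0[OF t] unfolding u_def u'_def by (simp only: line_e3)
  have main: "integral {0..L} (\<lambda>t. (u t)\<^sup>2) \<le> 2 * (integral {0..L} u)\<^sup>2 / L + 8 * L\<^sup>2 * integral {0..L} (\<lambda>t. (u' t)\<^sup>2)"
    by (rule poinc1[OF d cu' L])
  have e1: "(\<integral>\<^sup>+ z. ennreal (indicator {0<..<L} z * (\<phi> (x,z))\<^sup>2) \<partial>lborel) = ennreal (integral {0..L} (\<lambda>t. (u t)\<^sup>2))"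
    using C2[OF continuous_on_power[OF cu, of 2]] L unfolding u_def by simp
  have e2: "(\<integral>\<^sup>+ z. ennreal (indicator {0<..<L} z * (dd ?e \<phi> (x,z))\<^sup>2) \<partial>lborel) = ennreal (integral {0..L} (\<lambda>t. (u' t)\<^sup>2))"
    using C2[OF continuous_on_power[OF cu', of 2]] L unfolding u'_def by simp
  have e3: "(LINT z:{0<..<L}|lborel. \<phi> (x,z)) = integral {0..L} u"
    using C1(2)[OF cu] L unfolding u_def by simp
  have nn: "integral {0..L} (\<lambda>t. (u' t)\<^sup>2) \<ge> 0"
    by (rule integral_nonneg) (auto intro!: integrable_continuous_interval continuous_intros continuous_on_subset[OF cu'])
  have "ennreal (integral {0..L} (\<lambda>t. (u t)\<^sup>2)) \<le> ennreal (2 * (integral {0..L} u)\<^sup>2 / L + 8 * L\<^sup>2 * integral {0..L} (\<lambda>t. (u' t)\<^sup>2))"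
    using main by (rule ennreal_leI)
  also have "\<dots> = ennreal (2 * (integral {0..L} u)\<^sup>2 / L) + ennreal (8 * L\<^sup>2) * ennreal (integral {0..L} (\<lambda>t. (u' t)\<^sup>2))"
    using L nn by (simp add: ennreal_plus ennreal_mult)
  finally show ?thesis using e1 e2 e3 by simp
qed

lemma fiber_CS:
  fixes f g :: "real \<Rightarrow> real"
  assumes L: "L > 0" and c: "continuous_on UNIV f"
    and hm: "(\<lambda>z. indicator {0<..<L} z * g z) \<in> borel_measurable lborel"
    and g0: "(LINT z:{0<..<L}|lborel. g z) = 0"
  shows "ennreal ((LINT z:{0<..<L}|lborel. f z)\<^sup>2) \<le> ennreal L * (\<integral>\<^sup>+ z. ennreal (indicator {0<..<L} z * (f z - g z)\<^sup>2) \<partial>lborel)"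
proof -
  let ?S = "{0<..<L} :: real set"
  define hS where "hS z = indicator ?S z * (f z - g z)" for z
  have fm: "(\<lambda>z. indicator ?S z * f z) \<in> borel_measurable lborel"
    using cont_meas[OF c] by measurable
  have hSm: "hS \<in> borel_measurable lborel"
  proof -
    have "hS = (\<lambda>z. indicator ?S z * f z - indicator ?S z * g z)" by (rule ext) (simp add: hS_def algebra_simps)
    then show ?thesis using fm hm by simp
  qed
  define N where "N = (\<integral>\<^sup>+ z. ennreal (indicator ?S z * (f z - g z)\<^sup>2) \<partial>lborel)"
  define A1 where "A1 = (\<integral>\<^sup>+ z. ennreal \<bar>hS z\<bar> \<partial>lborel)"
  have CS: "A1\<^sup>2 \<le> N * ennreal L"
  proof -
    have "(\<integral>\<^sup>+ z. ennreal \<bar>hS z\<bar> * ennreal (indicator ?S z) \<partial>lborel)\<^sup>2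
       \<le> (\<integral>\<^sup>+ z. (ennreal \<bar>hS z\<bar>)\<^sup>2 \<partial>lborel) * (\<integral>\<^sup>+ z. (ennreal (indicator ?S z))\<^sup>2 \<partial>lborel)"
      by (rule Cauchy_Schwarz_nn_integral) (use hSm in auto)
    moreover have "(\<lambda>z. ennreal \<bar>hS z\<bar> * ennreal (indicator ?S z)) = (\<lambda>z. ennreal \<bar>hS z\<bar>)"
      by (rule ext) (simp add: hS_def indicator_def)
    moreover have "(\<lambda>z. (ennreal \<bar>hS z\<bar>)\<^sup>2) = (\<lambda>z. ennreal (indicator ?S z * (f z - g z)\<^sup>2))"
      by (rule ext) (simp add: hS_def indicator_def ennreal_power power2_abs)
    moreover have "(\<lambda>z. (ennreal (indicator ?S z))\<^sup>2) = (\<lambda>z. indicator ?S z :: ennreal)"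
      by (rule ext) (simp add: indicator_def)
    moreover have "(\<integral>\<^sup>+ z. (indicator ?S z :: ennreal) \<partial>lborel) = ennreal L" using L by simp
    ultimately show ?thesis unfolding A1_def N_def by simp
  qed
  show ?thesis
  proof (cases "N = \<infinity>")
    case True
    then show ?thesis using L by (simp add: N_def[symmetric] ennreal_mult_top)
  next
    case False
    then have "N * ennreal L < \<infinity>" by (simp add: less_top ennreal_mult_less_top)
    then have "A1\<^sup>2 < \<infinity>" using CS by (meson le_less_trans)
    then have A1f: "A1 < \<infinity>" by (simp add: power_less_top_ennreal)
    have ih: "integrable lborel hS"
      by (rule integrableI_bounded[OF hSm]) (use A1f in \<open>simp add: A1_def\<close>)
    have fi: "set_integrable lborel ?S f" using C1(1)[OF c] L by simp
    have gi: "set_integrable lborel ?S g"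
    proof -
      have "(\<lambda>z. indicator ?S z *\<^sub>R g z) = (\<lambda>z. indicator ?S z *\<^sub>R f z - hS z)"
        by (rule ext) (simp add: hS_def algebra_simps)
      then show ?thesis using fi ih unfolding set_integrable_def by simp
    qed
    have "(LINT z:?S|lborel. f z) = (LINT z:?S|lborel. f z - g z) + (LINT z:?S|lborel. g z)"
      using set_integral_diff(2)[OF fi gi] by simp
    also have "\<dots> = integral\<^sup>L lborel hS" using g0 by (simp add: set_lebesgue_integral_def hS_def[abs_def])
    finally have eq: "(LINT z:?S|lborel. f z) = integral\<^sup>L lborel hS" .
    have "ennreal \<bar>integral\<^sup>L lborel hS\<bar> \<le> A1"
      using integral_norm_bound_ennreal[OF ih] unfolding A1_def by simp
    then have "(ennreal \<bar>integral\<^sup>L lborel hS\<bar>)\<^sup>2 \<le> A1\<^sup>2" by (rule power_mono) simp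
    then have "ennreal ((integral\<^sup>L lborel hS)\<^sup>2) \<le> A1\<^sup>2" by (simp add: ennreal_power power2_abs)
    also have "\<dots> \<le> N * ennreal L" by (rule CS)
    finally show ?thesis using eq by (simp add: N_def mult.commute)
  qed
qed


lemma einterval_0L: "einterval 0 (ereal L) = {0<..<L}"
  using einterval_eq_Icc[of 0 L] by (simp add: zero_ereal_def)

lemma LBINT_Ioo: "0 \<le> L \<Longrightarrow> (LBINT z=0..L. f z) = (LINT z:{0<..<L}|lborel. f z)"
  by (simp add: interval_lebesgue_integral_def einterval_0L)

lemma pair_meas: "(\<lambda>z::real. (x::real\<times>real, z)) \<in> measurable lborel lborel"
  using borel_measurable_continuous_onI[of "\<lambda>z::real. (x, z)"] by (simp add: continuous_intros)

lemma tonelli_sq: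
  assumes m: "(g :: pt \<Rightarrow> real) \<in> borel_measurable lborel"
  shows "(\<integral>\<^sup>+ p. ennreal ((g p)\<^sup>2) \<partial>lborel) = (\<integral>\<^sup>+ x. (\<integral>\<^sup>+ z. ennreal ((g (x,z))\<^sup>2) \<partial>lborel) \<partial>lborel)"
proof -
  have m': "(\<lambda>p. ennreal ((g p)\<^sup>2)) \<in> borel_measurable (lborel \<Otimes>\<^sub>M lborel)"
    using m by (simp add: lborel_prod)
  show ?thesis
    using lborel.nn_integral_fst[OF m', symmetric] by (simp add: lborel_prod)
qed

lemma nn_ip:
  assumes "L2 lborel g"
  shows "(\<integral>\<^sup>+ p. ennreal ((g p)\<^sup>2) \<partial>lborel) = ennreal (ip lborel g g)"
  using nn_integral_eq_integral[of lborel "\<lambda>p. (g p)\<^sup>2"] assms unfolding L2_def ip_def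
  by (simp add: power2_eq_square)

lemma fiber_eq:
  assumes x: "x \<in> ball 0 R"
  shows "(\<integral>\<^sup>+ z. ennreal ((rs (dom_X R L) f (x,z))\<^sup>2) \<partial>lborel)
       = (\<integral>\<^sup>+ z. ennreal (indicator {0<..<L} z * (f (x,z))\<^sup>2) \<partial>lborel)"
proof (rule nn_integral_cong_AE)
  show "AE z in lborel. ennreal ((rs (dom_X R L) f (x,z))\<^sup>2) = ennreal (indicator {0<..<L} z * (f (x,z))\<^sup>2)"
    using AE_lborel_singleton[of 0]
  proof eventually_elim
    case (elim z)
    then show ?case using x by (auto simp: rs_def dom_X_def indicator_def)
  qed
qed

lemma fiber_out:
  assumes x: "x \<notin> ball 0 R"
  shows "(\<integral>\<^sup>+ z. ennreal ((rs (dom_X R L) f (x,z))\<^sup>2) \<partial>lborel) = 0"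
  using x by (simp add: rs_def dom_X_def indicator_def)

lemma ennr_lin:
  fixes a b k :: real
  assumes "0 \<le> a" "0 \<le> b" "0 \<le> k"
  shows "2 * ennreal a + ennreal k * ennreal b = ennreal (2 * a + k * b)"
proof -
  have "ennreal (2 * a + k * b) = ennreal (2 * a) + ennreal (k * b)" using assms by (simp add: ennreal_plus)
  also have "ennreal (2 * a) = ennreal 2 * ennreal a" using assms by (simp add: ennreal_mult)
  also have "ennreal (k * b) = ennreal k * ennreal b" using assms by (simp add: ennreal_mult)
  finally show ?thesis by simp
qed

lemma poincare_test:
  assumes t: "test_fun R L \<phi>" and s: "sqint (dom_X R L) \<psi>" and L: "L > 0"
    and mean: "AE x in lborel. x \<in> ball 0 R \<longrightarrow> (LBINT z=0..L. \<psi> (x,z)) = 0"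
  shows "ip lborel (rs (dom_X R L) \<phi>) (rs (dom_X R L) \<phi>)
     \<le> 2 * ip lborel (rs (dom_X R L) (\<lambda>p. \<phi> p - \<psi> p)) (rs (dom_X R L) (\<lambda>p. \<phi> p - \<psi> p))
       + 8 * L\<^sup>2 * ip lborel (rs (dom_X R L) (dd ((0,0),1) \<phi>)) (rs (dom_X R L) (dd ((0,0),1) \<phi>))"
proof -
  let ?\<Omega> = "dom_X R L"
  let ?e = "(((0::real),(0::real)),(1::real))"
  let ?S = "{0<..<L} :: real set"
  have Lphi: "L2 lborel (rs ?\<Omega> \<phi>)" using sqint_L2[OF test_sqint[OF t]] .
  have Lpsi: "L2 lborel (rs ?\<Omega> \<psi>)" using sqint_L2[OF s] .
  have Ld: "L2 lborel (rs ?\<Omega> (\<lambda>p. \<phi> p - \<psi> p))" using L2_diff[OF Lphi Lpsi] by (simp add: rs_diff)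
  have Lz: "L2 lborel (rs ?\<Omega> (dd ?e \<phi>))" using sqint_L2[OF test_sqint[OF test_dd[OF t]]] by (simp add: Basis_pt)
  define G0 where "G0 x = (\<integral>\<^sup>+ z. ennreal ((rs ?\<Omega> \<phi> (x,z))\<^sup>2) \<partial>lborel)" for x
  define G1 where "G1 x = (\<integral>\<^sup>+ z. ennreal ((rs ?\<Omega> (\<lambda>p. \<phi> p - \<psi> p) (x,z))\<^sup>2) \<partial>lborel)" for x
  define G2 where "G2 x = (\<integral>\<^sup>+ z. ennreal ((rs ?\<Omega> (dd ?e \<phi>) (x,z))\<^sup>2) \<partial>lborel)" for x
  have Gm: "(\<lambda>x. \<integral>\<^sup>+ z. ennreal ((g (x,z))\<^sup>2) \<partial>lborel) \<in> borel_measurable lborel"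
    if "L2 lborel g" for g :: "pt \<Rightarrow> real"
  proof -
    have "(\<lambda>p. ennreal ((g p)\<^sup>2)) \<in> borel_measurable (lborel \<Otimes>\<^sub>M lborel)"
      using L2_meas[OF that] by (simp add: lborel_prod)
    then show ?thesis using lborel.borel_measurable_nn_integral[of "\<lambda>x z. ennreal ((g (x,z))\<^sup>2)" lborel]
      by simp
  qed
  have G1m: "G1 \<in> borel_measurable lborel" unfolding G1_def using Gm[OF Ld] .
  have G2m: "G2 \<in> borel_measurable lborel" unfolding G2_def using Gm[OF Lz] .
  have pw: "AE x in lborel. G0 x \<le> 2 * G1 x + ennreal (8 * L\<^sup>2) * G2 x"
    using mean
  proof eventually_elim
    case (elim x)
    show ?case
    proof (cases "x \<in> ball 0 R")
      case False
      then show ?thesis unfolding G0_def using fiber_out[OF False] by simp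
    next
      case True
      have "(LBINT z=0..L. \<psi> (x,z)) = (LINT z:?S|lborel. \<psi> (x,z))" by (rule LBINT_Ioo) (use L in simp)
      then have g0: "(LINT z:?S|lborel. \<psi> (x,z)) = 0" using elim True by simp
      have hm: "(\<lambda>z. indicator ?S z * \<psi> (x,z)) \<in> borel_measurable lborel"
      proof -
        have m1: "(\<lambda>z. rs ?\<Omega> \<psi> (x,z)) \<in> borel_measurable lborel"
          using measurable_compose[OF pair_meas L2_meas[OF Lpsi]] by simp
        have "(\<lambda>z. indicator ?S z * \<psi> (x,z)) = (\<lambda>z. indicator ?S z * rs ?\<Omega> \<psi> (x,z))"
          using True by (auto simp: rs_def dom_X_def indicator_def)
        then show ?thesis using m1 by simp
      qed
      have cx: "continuous_on UNIV (\<lambda>z. \<phi> (x,z))"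
        by (rule continuous_on_compose2[OF test_cont[OF t]]) (auto intro!: continuous_intros)
      have CS: "ennreal ((LINT z:?S|lborel. \<phi> (x,z))\<^sup>2) \<le> ennreal L * G1 x"
        using fiber_CS[OF L cx hm g0] fiber_eq[OF True, of L "\<lambda>p. \<phi> p - \<psi> p"] unfolding G1_def by simp
      have "G0 x \<le> ennreal (2 * (LINT z:?S|lborel. \<phi> (x,z))\<^sup>2 / L) + ennreal (8 * L\<^sup>2) * G2 x"
        using P1nn[OF t L, of x] fiber_eq[OF True] unfolding G0_def G2_def by simp
      also have "ennreal (2 * (LINT z:?S|lborel. \<phi> (x,z))\<^sup>2 / L) = ennreal (2 / L) * ennreal ((LINT z:?S|lborel. \<phi> (x,z))\<^sup>2)"
        using L by (simp add: ennreal_mult[symmetric])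
      also have "\<dots> \<le> ennreal (2 / L) * (ennreal L * G1 x)" using CS by (rule mult_left_mono) simp
      also have "\<dots> = 2 * G1 x"
        using L by (simp add: mult.assoc[symmetric] ennreal_mult[symmetric])
      finally show ?thesis by simp
    qed
  qed
  have "ennreal (ip lborel (rs ?\<Omega> \<phi>) (rs ?\<Omega> \<phi>)) = (\<integral>\<^sup>+ x. G0 x \<partial>lborel)"
    unfolding G0_def using nn_ip[OF Lphi] tonelli_sq[OF L2_meas[OF Lphi]] by simp
  also have "\<dots> \<le> (\<integral>\<^sup>+ x. 2 * G1 x + ennreal (8 * L\<^sup>2) * G2 x \<partial>lborel)"
    by (rule nn_integral_mono_AE[OF pw])
  also have "\<dots> = 2 * (\<integral>\<^sup>+ x. G1 x \<partial>lborel) + ennreal (8 * L\<^sup>2) * (\<integral>\<^sup>+ x. G2 x \<partial>lborel)"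
    using G1m G2m by (simp add: nn_integral_add nn_integral_cmult)
  also have "(\<integral>\<^sup>+ x. G1 x \<partial>lborel) = ennreal (ip lborel (rs ?\<Omega> (\<lambda>p. \<phi> p - \<psi> p)) (rs ?\<Omega> (\<lambda>p. \<phi> p - \<psi> p)))"
    unfolding G1_def using nn_ip[OF Ld] tonelli_sq[OF L2_meas[OF Ld]] by simp
  also have "(\<integral>\<^sup>+ x. G2 x \<partial>lborel) = ennreal (ip lborel (rs ?\<Omega> (dd ?e \<phi>)) (rs ?\<Omega> (dd ?e \<phi>)))"
    unfolding G2_def using nn_ip[OF Lz] tonelli_sq[OF L2_meas[OF Lz]] by simp
  also have "2 * ennreal (ip lborel (rs ?\<Omega> (\<lambda>p. \<phi> p - \<psi> p)) (rs ?\<Omega> (\<lambda>p. \<phi> p - \<psi> p)))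
          + ennreal (8 * L\<^sup>2) * ennreal (ip lborel (rs ?\<Omega> (dd ?e \<phi>)) (rs ?\<Omega> (dd ?e \<phi>)))
      = ennreal (2 * ip lborel (rs ?\<Omega> (\<lambda>p. \<phi> p - \<psi> p)) (rs ?\<Omega> (\<lambda>p. \<phi> p - \<psi> p))
              + (8 * L\<^sup>2) * ip lborel (rs ?\<Omega> (dd ?e \<phi>)) (rs ?\<Omega> (dd ?e \<phi>)))"
    by (rule ennr_lin) (auto simp: ip_nonneg)
  finally have FF: "ennreal (ip lborel (rs ?\<Omega> \<phi>) (rs ?\<Omega> \<phi>))
     \<le> ennreal (2 * ip lborel (rs ?\<Omega> (\<lambda>p. \<phi> p - \<psi> p)) (rs ?\<Omega> (\<lambda>p. \<phi> p - \<psi> p))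
              + 8 * L\<^sup>2 * ip lborel (rs ?\<Omega> (dd ?e \<phi>)) (rs ?\<Omega> (dd ?e \<phi>)))" .
  have nn: "0 \<le> 2 * ip lborel (rs ?\<Omega> (\<lambda>p. \<phi> p - \<psi> p)) (rs ?\<Omega> (\<lambda>p. \<phi> p - \<psi> p))
              + 8 * L\<^sup>2 * ip lborel (rs ?\<Omega> (dd ?e \<phi>)) (rs ?\<Omega> (dd ?e \<phi>))"
    by (intro add_nonneg_nonneg mult_nonneg_nonneg) (auto simp: ip_nonneg)
  show ?thesis using FF ennreal_le_iff[OF nn] by blast
qed


lemma dd1_deriv:
  fixes f :: "real \<Rightarrow> real"
  assumes "f differentiable (at p)"
  shows "dd 1 f p = deriv f p"
proof -
  have "DERIV f p :> deriv f p" using assms DERIV_deriv_iff_real_differentiable by blast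
  then have "(f has_derivative (*) (deriv f p)) (at p)" by (simp add: has_field_derivative_def)
  then have F: "(*) (deriv f p) = frechet_derivative f (at p)" by (rule frechet_derivative_at)
  show ?thesis unfolding dd_def using fun_cong[OF F, of 1] by simp
qed

lemma V2_cont:
  fixes V :: "real \<Rightarrow> real"
  assumes "smooth_on UNIV V"
  shows "continuous_on UNIV (deriv (deriv V))"
proof -
  have d: "iter_dd vs V differentiable (at p)" if "set vs \<subseteq> {1}" for vs p
    using assms that unfolding smooth_on_def by auto
  have e1: "deriv V = dd 1 V" by (rule ext) (use d[of "[]"] dd1_deriv in auto)
  have e2: "deriv (dd 1 V) = dd 1 (dd 1 V)" by (rule ext) (use d[of "[1]"] dd1_deriv in auto)
  have "continuous_on UNIV (dd 1 (dd 1 V))"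
    using d[of "[1,1]"] by (intro diff_cont) auto
  then show ?thesis by (simp add: e1 e2)
qed

lemma phibar_cont:
  fixes \<phi>bar :: "real \<times> real \<Rightarrow> real"
  assumes "smooth_on (ball 0 R) \<phi>bar"
  shows "continuous_on (ball 0 R) \<phi>bar"
proof -
  have "\<forall>p\<in>ball 0 R. \<phi>bar differentiable (at p)"
  proof
    fix p :: "real \<times> real" assume "p \<in> ball 0 R"
    then show "\<phi>bar differentiable (at p)"
      using assms[unfolded smooth_on_def, rule_format, of "[]" p] by simp
  qed
  then show ?thesis
    by (meson differentiable_at_imp_differentiable_on differentiable_imp_continuous_on)
qed

lemma Wbound:
  fixes V :: "real \<Rightarrow> real" and \<phi>bar :: "real \<times> real \<Rightarrow> real"
  assumes V: "smooth_on UNIV V" and b: "bounded (\<phi>bar ` ball 0 R)"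
  shows "\<exists>Mb\<ge>0. \<forall>x\<in>ball 0 R. \<bar>deriv (deriv V) (\<phi>bar x)\<bar> \<le> Mb"
proof -
  let ?K = "closure (\<phi>bar ` ball 0 R)"
  have K: "compact ?K" using compact_closure[THEN iffD2, OF b] .
  have "compact (deriv (deriv V) ` ?K)"
    using compact_continuous_image[OF continuous_on_subset[OF V2_cont[OF V] subset_UNIV] K] .
  from compact_imp_bounded[OF this] obtain B where B: "\<forall>y\<in>deriv (deriv V) ` ?K. norm y \<le> B"
    unfolding bounded_iff by blast
  show ?thesis
  proof (intro exI[of _ "max B 0"] conjI ballI)
    fix x :: "real \<times> real" assume "x \<in> ball 0 R"
    then have "\<phi>bar x \<in> \<phi>bar ` ball 0 R" by (rule imageI)
    then have "\<phi>bar x \<in> ?K" by (rule subsetD[OF closure_subset])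
    then have "deriv (deriv V) (\<phi>bar x) \<in> deriv (deriv V) ` ?K" by (rule imageI)
    then have "norm (deriv (deriv V) (\<phi>bar x)) \<le> B" using B by blast
    then show "\<bar>deriv (deriv V) (\<phi>bar x)\<bar> \<le> max B 0" by simp
  qed simp
qed

lemma Wmeas:
  fixes V :: "real \<Rightarrow> real" and \<phi>bar :: "real \<times> real \<Rightarrow> real"
  assumes V: "smooth_on UNIV V" and p: "smooth_on (ball 0 R) \<phi>bar"
  shows "(\<lambda>q. indicator (dom_X R L) q * deriv (deriv V) (\<phi>bar (fst q))) \<in> borel_measurable lborel"
proof -
  let ?U = "ball 0 R \<times> (UNIV :: real set)"
  have U: "?U \<in> sets borel" by (intro borel_Times) auto
  have c: "continuous_on ?U (\<lambda>q. deriv (deriv V) (\<phi>bar (fst q)))"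
  proof (rule continuous_on_compose2[OF V2_cont[OF V]])
    show "continuous_on ?U (\<lambda>q. \<phi>bar (fst q))"
      by (rule continuous_on_compose2[OF phibar_cont[OF p] continuous_on_fst[OF continuous_on_id]]) auto
  qed simp
  have m: "(\<lambda>q. indicator ?U q *\<^sub>R deriv (deriv V) (\<phi>bar (fst q))) \<in> borel_measurable lborel"
    using borel_measurable_continuous_on_indicator[OF U c] by simp
  have "(\<lambda>q. indicator (dom_X R L) q * deriv (deriv V) (\<phi>bar (fst q)))
      = (\<lambda>q. indicator (dom_X R L) q * (indicator ?U q *\<^sub>R deriv (deriv V) (\<phi>bar (fst q))))"
    by (rule ext) (auto simp: indicator_def dom_X_def)
  then show ?thesis using m by simp
qed


lemma sob_eq:
  assumes s0: "sqint \<Omega> f0" and s1: "\<And>b. b \<in> Basis \<Longrightarrow> sqint \<Omega> (f1 b)"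
    and s2: "\<And>b b'. b \<in> Basis \<Longrightarrow> b' \<in> Basis \<Longrightarrow> sqint \<Omega> (f2 b b')"
  shows "sob2_norm \<Omega> f0 f1 f2 = nrm lborel (rs \<Omega> f0)
     + sqrt (\<Sum>b\<in>Basis. ip lborel (rs \<Omega> (f1 b)) (rs \<Omega> (f1 b)))
     + sqrt (\<Sum>b\<in>Basis. \<Sum>b'\<in>Basis. ip lborel (rs \<Omega> (f2 b b')) (rs \<Omega> (f2 b b')))"
  unfolding sob2_norm_def L2norm_nrm
  using LINT_sum_sq[of Basis \<Omega> f1] LINT_sum_sq2[of Basis \<Omega> f2] s1 s2 by simp

lemma three_parts:
  fixes a b c :: "nat \<Rightarrow> real"
  assumes "(\<lambda>n. a n + b n + c n) \<longlonglongrightarrow> 0" "\<And>n. a n \<ge> 0" "\<And>n. b n \<ge> 0" "\<And>n. c n \<ge> 0"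
  shows "a \<longlonglongrightarrow> 0" "b \<longlonglongrightarrow> 0" "c \<longlonglongrightarrow> 0"
proof -
  show "a \<longlonglongrightarrow> 0"
    by (rule tendsto_sandwich[OF _ _ tendsto_const assms(1)]) (use assms(2-4) in \<open>auto intro!: always_eventually\<close>)
  show "b \<longlonglongrightarrow> 0"
    by (rule tendsto_sandwich[OF _ _ tendsto_const assms(1)]) (use assms(2-4) in \<open>auto intro!: always_eventually\<close>)
  show "c \<longlonglongrightarrow> 0"
    by (rule tendsto_sandwich[OF _ _ tendsto_const assms(1)]) (use assms(2-4) in \<open>auto intro!: always_eventually\<close>)
qed

lemma sqrt_sum_part:
  fixes t :: "'i \<Rightarrow> real"
  assumes "finite I" "i \<in> I" "\<And>j. j \<in> I \<Longrightarrow> 0 \<le> t j"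
  shows "sqrt (t i) \<le> sqrt (\<Sum>j\<in>I. t j)"
  using member_le_sum[of i I t] assms by (simp add: real_sqrt_le_mono)

lemma squeeze0:
  fixes x y :: "nat \<Rightarrow> real"
  assumes "y \<longlonglongrightarrow> 0" "\<And>n. 0 \<le> x n" "\<And>n. x n \<le> y n"
  shows "x \<longlonglongrightarrow> 0"
  by (rule tendsto_sandwich[OF _ _ tendsto_const assms(1)]) (use assms in \<open>auto intro!: always_eventually\<close>)

lemma sum_ip_nonneg: "0 \<le> (\<Sum>b\<in>I. ip M (f b) (f b))"
  by (simp add: sum_nonneg ip_nonneg)

lemma sum2_ip_nonneg: "0 \<le> (\<Sum>b\<in>I. \<Sum>b'\<in>J. ip M (f b b') (f b b'))"
  by (simp add: sum_nonneg ip_nonneg)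


lemma core_limits:
  assumes R: "R > 0" and L: "L > 0" and H: "in_H R L \<psi> g1 g2"
  shows "(\<Sum>b\<in>Basis. ip lborel (rs (dom_X R L) (g1 b)) (rs (dom_X R L) (g1 b)))
           = - (\<Sum>b\<in>Basis. ip lborel (rs (dom_X R L) \<psi>) (rs (dom_X R L) (g2 b b)))"
    and "(\<Sum>b\<in>Basis. \<Sum>b'\<in>Basis. ip lborel (rs (dom_X R L) (g2 b b')) (rs (dom_X R L) (g2 b b')))
           = (\<Sum>b\<in>Basis. \<Sum>b'\<in>Basis. ip lborel (rs (dom_X R L) (g2 b b)) (rs (dom_X R L) (g2 b' b')))"
    and "ip lborel (rs (dom_X R L) \<psi>) (rs (dom_X R L) \<psi>)
           \<le> 8 * L\<^sup>2 * ip lborel (rs (dom_X R L) (g1 ((0,0),1))) (rs (dom_X R L) (g1 ((0,0),1)))"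
proof -
  let ?\<Omega> = "dom_X R L"
  let ?r = "rs ?\<Omega>"
  let ?e = "(((0::real),(0::real)),(1::real))"
  have e: "?e \<in> Basis" by (simp add: Basis_pt)
  obtain \<phi> where \<phi>t: "\<And>n. test_fun R L (\<phi> n)"
    and Sc: "(\<lambda>n. sob2_norm ?\<Omega> (\<lambda>p. \<phi> n p - \<psi> p) (\<lambda>b p. dd b (\<phi> n) p - g1 b p)
                   (\<lambda>b b' p. dd b (dd b' (\<phi> n)) p - g2 b b' p)) \<longlonglongrightarrow> 0"
    and wd: "weak_derivs R L \<psi> g1 g2"
    and mean: "AE x in lborel. x \<in> ball 0 R \<longrightarrow> (LBINT z=0..L. \<psi> (x, z)) = 0"
    using H unfolding in_H_def by blast
  have s\<psi>: "sqint ?\<Omega> \<psi>" and s1: "\<And>b. b \<in> Basis \<Longrightarrow> sqint ?\<Omega> (g1 b)"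
    and s2: "\<And>b b'. b \<in> Basis \<Longrightarrow> b' \<in> Basis \<Longrightarrow> sqint ?\<Omega> (g2 b b')"
    using wd unfolding weak_derivs_def by auto
  have L\<psi>: "L2 lborel (?r \<psi>)" using sqint_L2[OF s\<psi>] .
  have L1: "\<And>b. b \<in> Basis \<Longrightarrow> L2 lborel (?r (g1 b))" using sqint_L2[OF s1] .
  have L2': "\<And>b b'. b \<in> Basis \<Longrightarrow> b' \<in> Basis \<Longrightarrow> L2 lborel (?r (g2 b b'))" using sqint_L2[OF s2] .
  have L\<phi>: "\<And>n. L2 lborel (?r (\<phi> n))" using sqint_L2[OF test_sqint[OF \<phi>t]] .
  have L\<phi>1: "\<And>n b. b \<in> Basis \<Longrightarrow> L2 lborel (?r (dd b (\<phi> n)))"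
    using sqint_L2[OF test_sqint[OF test_dd[OF \<phi>t]]] .
  have L\<phi>2: "\<And>n b b'. b \<in> Basis \<Longrightarrow> b' \<in> Basis \<Longrightarrow> L2 lborel (?r (dd b (dd b' (\<phi> n))))"
    using sqint_L2[OF test_sqint[OF test_dd[OF test_dd[OF \<phi>t]]]] .
  have sd0: "sqint ?\<Omega> (\<lambda>p. \<phi> n p - \<psi> p)" for n
    using L2_sqint[of ?\<Omega>] L2_diff[OF L\<phi> L\<psi>] by (simp add: rs_diff)
  have sd1: "sqint ?\<Omega> (\<lambda>p. dd b (\<phi> n) p - g1 b p)" if "b \<in> Basis" for n b
    using L2_sqint[of ?\<Omega>] L2_diff[OF L\<phi>1[OF that] L1[OF that]] by (simp add: rs_diff)
  have sd2: "sqint ?\<Omega> (\<lambda>p. dd b (dd b' (\<phi> n)) p - g2 b b' p)" if "b \<in> Basis" "b' \<in> Basis" for n b b'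
    using L2_sqint[of ?\<Omega>] L2_diff[OF L\<phi>2[OF that] L2'[OF that]] by (simp add: rs_diff)
  define T0 where "T0 n = nrm lborel (?r (\<lambda>p. \<phi> n p - \<psi> p))" for n
  define T1 where "T1 n = sqrt (\<Sum>b\<in>Basis. ip lborel (?r (\<lambda>p. dd b (\<phi> n) p - g1 b p)) (?r (\<lambda>p. dd b (\<phi> n) p - g1 b p)))" for n
  define T2 where "T2 n = sqrt (\<Sum>b\<in>Basis. \<Sum>b'\<in>Basis. ip lborel (?r (\<lambda>p. dd b (dd b' (\<phi> n)) p - g2 b b' p)) (?r (\<lambda>p. dd b (dd b' (\<phi> n)) p - g2 b b' p)))" for n
  have Seq: "sob2_norm ?\<Omega> (\<lambda>p. \<phi> n p - \<psi> p) (\<lambda>b p. dd b (\<phi> n) p - g1 b p)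
                   (\<lambda>b b' p. dd b (dd b' (\<phi> n)) p - g2 b b' p) = T0 n + T1 n + T2 n" for n
    unfolding T0_def T1_def T2_def by (rule sob_eq[OF sd0 sd1 sd2])
  have T: "T0 \<longlonglongrightarrow> 0" "T1 \<longlonglongrightarrow> 0" "T2 \<longlonglongrightarrow> 0"
    using three_parts[of T0 T1 T2] Sc Seq
    by (simp_all add: T0_def T1_def T2_def nrm_nonneg sum_ip_nonneg sum2_ip_nonneg)
  have c0: "(\<lambda>n. nrm lborel (\<lambda>x. ?r (\<phi> n) x - ?r \<psi> x)) \<longlonglongrightarrow> 0"
    using T(1) unfolding T0_def rs_diff .
  have c1: "(\<lambda>n. nrm lborel (\<lambda>x. ?r (dd b (\<phi> n)) x - ?r (g1 b) x)) \<longlonglongrightarrow> 0" if b: "b \<in> Basis" for b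
  proof (rule squeeze0[OF T(2)])
    fix n
    show "0 \<le> nrm lborel (\<lambda>x. ?r (dd b (\<phi> n)) x - ?r (g1 b) x)" by (rule nrm_nonneg)
    show "nrm lborel (\<lambda>x. ?r (dd b (\<phi> n)) x - ?r (g1 b) x) \<le> T1 n"
      unfolding T1_def nrm_def rs_diff
      by (rule sqrt_sum_part[OF _ b]) (auto simp: ip_nonneg)
  qed
  have c2: "(\<lambda>n. nrm lborel (\<lambda>x. ?r (dd b (dd b' (\<phi> n))) x - ?r (g2 b b') x)) \<longlonglongrightarrow> 0"
    if b: "b \<in> Basis" and b': "b' \<in> Basis" for b b'
  proof (rule squeeze0[OF T(3)])
    fix n
    show "0 \<le> nrm lborel (\<lambda>x. ?r (dd b (dd b' (\<phi> n))) x - ?r (g2 b b') x)" by (rule nrm_nonneg)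
    have "nrm lborel (\<lambda>x. ?r (dd b (dd b' (\<phi> n))) x - ?r (g2 b b') x)
        \<le> sqrt (\<Sum>b'\<in>Basis. ip lborel (?r (\<lambda>p. dd b (dd b' (\<phi> n)) p - g2 b b' p)) (?r (\<lambda>p. dd b (dd b' (\<phi> n)) p - g2 b b' p)))"
      unfolding nrm_def rs_diff
      by (rule sqrt_sum_part[OF _ b']) (auto simp: ip_nonneg)
    also have "\<dots> \<le> T2 n"
      unfolding T2_def by (rule sqrt_sum_part[OF _ b]) (auto simp: sum_ip_nonneg)
    finally show "nrm lborel (\<lambda>x. ?r (dd b (dd b' (\<phi> n))) x - ?r (g2 b b') x) \<le> T2 n" .
  qed
  have c2d: "(\<lambda>n. nrm lborel (\<lambda>x. ?r (dd b (dd b (\<phi> n))) x - ?r (g2 b b) x)) \<longlonglongrightarrow> 0" if b: "b \<in> Basis" for b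
    using c2[OF b b] .
  have lim1a: "(\<lambda>n. \<Sum>b\<in>Basis. ip lborel (?r (dd b (\<phi> n))) (?r (dd b (\<phi> n))))
      \<longlonglongrightarrow> (\<Sum>b\<in>Basis. ip lborel (?r (g1 b)) (?r (g1 b)))"
    by (rule tendsto_sum, rule ip_tendsto[OF L1 L1 L\<phi>1 L\<phi>1 c1 c1]) auto
  have lim1b: "(\<lambda>n. - (\<Sum>b\<in>Basis. ip lborel (?r (\<phi> n)) (?r (dd b (dd b (\<phi> n))))))
      \<longlonglongrightarrow> - (\<Sum>b\<in>Basis. ip lborel (?r \<psi>) (?r (g2 b b)))"
    by (rule tendsto_minus, rule tendsto_sum, rule ip_tendsto[OF L\<psi> L2' L\<phi> L\<phi>2 c0 c2d]) auto
  have eq1: "(\<Sum>b\<in>Basis. ip lborel (?r (dd b (\<phi> n))) (?r (dd b (\<phi> n))))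
      = - (\<Sum>b\<in>Basis. ip lborel (?r (\<phi> n)) (?r (dd b (dd b (\<phi> n)))))" for n
    using test_id1[OF \<phi>t _ _ R] L by (simp add: sum_negf[symmetric])
  show "(\<Sum>b\<in>Basis. ip lborel (?r (g1 b)) (?r (g1 b))) = - (\<Sum>b\<in>Basis. ip lborel (?r \<psi>) (?r (g2 b b)))"
    using LIMSEQ_unique[OF lim1a] lim1b eq1 by simp
  have lim2a: "(\<lambda>n. \<Sum>b\<in>Basis. \<Sum>b'\<in>Basis. ip lborel (?r (dd b (dd b' (\<phi> n)))) (?r (dd b (dd b' (\<phi> n)))))
      \<longlonglongrightarrow> (\<Sum>b\<in>Basis. \<Sum>b'\<in>Basis. ip lborel (?r (g2 b b')) (?r (g2 b b')))"
    by (intro tendsto_sum ip_tendsto[OF L2' L2' L\<phi>2 L\<phi>2 c2 c2]) auto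
  have lim2b: "(\<lambda>n. \<Sum>b\<in>Basis. \<Sum>b'\<in>Basis. ip lborel (?r (dd b (dd b (\<phi> n)))) (?r (dd b' (dd b' (\<phi> n)))))
      \<longlonglongrightarrow> (\<Sum>b\<in>Basis. \<Sum>b'\<in>Basis. ip lborel (?r (g2 b b)) (?r (g2 b' b')))"
    by (intro tendsto_sum ip_tendsto[OF L2' L2' L\<phi>2 L\<phi>2 c2d c2d]) auto
  have eq2: "(\<Sum>b\<in>Basis. \<Sum>b'\<in>Basis. ip lborel (?r (dd b (dd b' (\<phi> n)))) (?r (dd b (dd b' (\<phi> n)))))
      = (\<Sum>b\<in>Basis. \<Sum>b'\<in>Basis. ip lborel (?r (dd b (dd b (\<phi> n)))) (?r (dd b' (dd b' (\<phi> n)))))" for n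
    using test_id2[OF \<phi>t _ _ _ R] L by (intro sum.cong refl) auto
  show "(\<Sum>b\<in>Basis. \<Sum>b'\<in>Basis. ip lborel (?r (g2 b b')) (?r (g2 b b')))
      = (\<Sum>b\<in>Basis. \<Sum>b'\<in>Basis. ip lborel (?r (g2 b b)) (?r (g2 b' b')))"
    using LIMSEQ_unique[OF lim2a] lim2b eq2 by simp
  have lim3a: "(\<lambda>n. ip lborel (?r (\<phi> n)) (?r (\<phi> n))) \<longlonglongrightarrow> ip lborel (?r \<psi>) (?r \<psi>)"
    by (rule ip_tendsto[OF L\<psi> L\<psi> L\<phi> L\<phi> c0 c0])
  have sq0: "(\<lambda>n. ip lborel (\<lambda>x. ?r (\<phi> n) x - ?r \<psi> x) (\<lambda>x. ?r (\<phi> n) x - ?r \<psi> x)) \<longlonglongrightarrow> 0"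
    using tendsto_power[OF c0, of 2] by (simp add: nrm_sq)
  have lim3b: "(\<lambda>n. 2 * ip lborel (\<lambda>x. ?r (\<phi> n) x - ?r \<psi> x) (\<lambda>x. ?r (\<phi> n) x - ?r \<psi> x)
        + 8 * L\<^sup>2 * ip lborel (?r (dd ?e (\<phi> n))) (?r (dd ?e (\<phi> n))))
      \<longlonglongrightarrow> 2 * 0 + 8 * L\<^sup>2 * ip lborel (?r (g1 ?e)) (?r (g1 ?e))"
    by (intro tendsto_intros sq0 ip_tendsto[OF L1[OF e] L1[OF e] L\<phi>1[OF e] L\<phi>1[OF e] c1[OF e] c1[OF e]])
  have le3: "ip lborel (?r (\<phi> n)) (?r (\<phi> n)) \<le> 2 * ip lborel (\<lambda>x. ?r (\<phi> n) x - ?r \<psi> x) (\<lambda>x. ?r (\<phi> n) x - ?r \<psi> x)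
        + 8 * L\<^sup>2 * ip lborel (?r (dd ?e (\<phi> n))) (?r (dd ?e (\<phi> n)))" for n
    using poincare_test[OF \<phi>t s\<psi> L mean] by (simp add: rs_diff)
  show "ip lborel (?r \<psi>) (?r \<psi>) \<le> 8 * L\<^sup>2 * ip lborel (?r (g1 ?e)) (?r (g1 ?e))"
    using LIMSEQ_le[OF lim3a lim3b] le3 by simp
qed


lemma core_est:
  fixes V :: "real \<Rightarrow> real" and \<phi>bar :: "real \<times> real \<Rightarrow> real"
  assumes R: "R > 0" and L: "L > 0" and Mb: "Mb \<ge> 0"
    and Wb: "\<forall>x\<in>ball 0 R. \<bar>deriv (deriv V) (\<phi>bar x)\<bar> \<le> Mb"
    and Wm: "(\<lambda>q. indicator (dom_X R L) q * deriv (deriv V) (\<phi>bar (fst q))) \<in> borel_measurable lborel"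
    and small: "8 * L\<^sup>2 * Mb \<le> 1/2" and Lq: "L \<le> 1/4"
    and H: "in_H R L \<psi> g1 g2"
  shows "sob2_norm (dom_X R L) \<psi> g1 g2 \<le> 9 * L2norm (dom_X R L) (Lop V \<phi>bar \<psi> g2)"
    and "nrm lborel (rs (dom_X R L) \<psi>) \<le> 16 * L\<^sup>2 * L2norm (dom_X R L) (Lop V \<phi>bar \<psi> g2)"
proof -
  let ?\<Omega> = "dom_X R L"
  let ?r = "rs ?\<Omega>"
  let ?e = "(((0::real),(0::real)),(1::real))"
  have e: "?e \<in> Basis" by (simp add: Basis_pt)
  have wd: "weak_derivs R L \<psi> g1 g2" using H unfolding in_H_def by blast
  have s\<psi>: "sqint ?\<Omega> \<psi>" and s1: "\<And>b. b \<in> Basis \<Longrightarrow> sqint ?\<Omega> (g1 b)"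
    and s2: "\<And>b b'. b \<in> Basis \<Longrightarrow> b' \<in> Basis \<Longrightarrow> sqint ?\<Omega> (g2 b b')"
    using wd unfolding weak_derivs_def by auto
  have L\<psi>: "L2 lborel (?r \<psi>)" using sqint_L2[OF s\<psi>] .
  have L1: "\<And>b. b \<in> Basis \<Longrightarrow> L2 lborel (?r (g1 b))" using sqint_L2[OF s1] .
  have L2': "\<And>b b'. b \<in> Basis \<Longrightarrow> b' \<in> Basis \<Longrightarrow> L2 lborel (?r (g2 b b'))" using sqint_L2[OF s2] .
  note I = core_limits[OF R L H]
  define \<Delta> where "\<Delta> p = (\<Sum>b\<in>Basis. ?r (g2 b b) p)" for p
  have L\<Delta>: "L2 lborel \<Delta>" unfolding \<Delta>_def[abs_def] by (rule L2_sum) (auto intro: L2')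
  define W where "W q = indicator ?\<Omega> q * deriv (deriv V) (\<phi>bar (fst q))" for q
  have Wm': "W \<in> borel_measurable lborel" using Wm unfolding W_def[abs_def] .
  have Wb': "\<bar>W q\<bar> \<le> Mb" for q
  proof (cases "q \<in> ?\<Omega>")
    case True
    then have "fst q \<in> ball 0 R" by (auto simp: dom_X_def)
    then show ?thesis using Wb True by (simp add: W_def)
  qed (simp add: W_def Mb)
  have LW: "L2 lborel (\<lambda>p. W p * ?r \<psi> p)" by (rule L2_bmult[OF L\<psi> Wm' Wb'])
  have rL: "?r (Lop V \<phi>bar \<psi> g2) = (\<lambda>p. \<Delta> p - W p * ?r \<psi> p)"
    by (rule ext) (simp add: rs_def Lop_def \<Delta>_def W_def indicator_def sum_distrib_left)
  define N where "N = L2norm ?\<Omega> (Lop V \<phi>bar \<psi> g2)"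
  have N: "N = nrm lborel (\<lambda>p. \<Delta> p - W p * ?r \<psi> p)" unfolding N_def L2norm_nrm rL ..
  have N0: "N \<ge> 0" using N nrm_nonneg by simp
  define a where "a = nrm lborel (?r \<psi>)"
  define d where "d = nrm lborel \<Delta>"
  have a0: "a \<ge> 0" and d0: "d \<ge> 0" unfolding a_def d_def by (simp_all add: nrm_nonneg)
  have nW: "nrm lborel (\<lambda>p. W p * ?r \<psi> p) \<le> Mb * a"
  proof -
    have "ip lborel (\<lambda>p. W p * ?r \<psi> p) (\<lambda>p. W p * ?r \<psi> p) \<le> ip lborel (\<lambda>p. Mb\<^sup>2 * ?r \<psi> p) (?r \<psi>)"
      unfolding ip_def
    proof (rule integral_mono)
      show "integrable lborel (\<lambda>x. W x * ?r \<psi> x * (W x * ?r \<psi> x))" by (rule L2_prod_int[OF LW LW])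
      show "integrable lborel (\<lambda>x. Mb\<^sup>2 * ?r \<psi> x * ?r \<psi> x)" by (rule L2_prod_int[OF L2_cmult[OF L\<psi>] L\<psi>])
      fix x
      have "(W x)\<^sup>2 \<le> Mb\<^sup>2" using Wb'[of x] by (metis abs_ge_zero power_mono power2_abs)
      then have "(W x)\<^sup>2 * (?r \<psi> x)\<^sup>2 \<le> Mb\<^sup>2 * (?r \<psi> x)\<^sup>2" by (rule mult_right_mono) simp
      then show "W x * ?r \<psi> x * (W x * ?r \<psi> x) \<le> Mb\<^sup>2 * ?r \<psi> x * ?r \<psi> x"
        by (simp add: power2_eq_square algebra_simps)
    qed
    also have "\<dots> = (Mb * a)\<^sup>2" unfolding a_def using ip_cmult_left[of lborel "Mb\<^sup>2" "?r \<psi>" "?r \<psi>"]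
      by (simp add: nrm_sq power_mult_distrib)
    finally have "(nrm lborel (\<lambda>p. W p * ?r \<psi> p))\<^sup>2 \<le> (Mb * a)\<^sup>2" by (simp add: nrm_sq)
    then show ?thesis using Mb a0 nrm_nonneg by (simp add: power2_le_iff_abs_le)
  qed
  have dN: "d \<le> N + Mb * a"
    using nrm_triangle_diff[OF L\<Delta> LW] nW unfolding d_def N by simp
  define G where "G = (\<Sum>b\<in>Basis. ip lborel (?r (g1 b)) (?r (g1 b)))"
  have G0: "G \<ge> 0" unfolding G_def by (rule sum_ip_nonneg)
  have Gip: "G = - ip lborel (?r \<psi>) \<Delta>"
    unfolding G_def I(1) \<Delta>_def[abs_def] by (subst ip_sum_right) (auto intro: L\<psi> L2')
  have Gad: "G \<le> a * d"
    using ip_abs_le[OF L\<psi> L\<Delta>] Gip unfolding a_def d_def by simp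
  have Ge: "ip lborel (?r (g1 ?e)) (?r (g1 ?e)) \<le> G"
    unfolding G_def by (rule member_le_sum[OF e]) (auto simp: ip_nonneg)
  have aa: "a * a \<le> a * (8 * L\<^sup>2 * d)"
  proof -
    have "a * a = ip lborel (?r \<psi>) (?r \<psi>)" unfolding a_def using nrm_sq by (simp add: power2_eq_square)
    also have "\<dots> \<le> 8 * L\<^sup>2 * ip lborel (?r (g1 ?e)) (?r (g1 ?e))" by (rule I(3))
    also have "\<dots> \<le> 8 * L\<^sup>2 * G" using Ge by (simp add: mult_left_mono)
    also have "\<dots> \<le> 8 * L\<^sup>2 * (a * d)" using Gad by (simp add: mult_left_mono)
    finally show ?thesis by (simp add: algebra_simps)
  qed
  have ad: "a \<le> 8 * L\<^sup>2 * d"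
  proof (cases "a = 0")
    case True then show ?thesis using d0 by simp
  next
    case False then have "a > 0" using a0 by simp
    then show ?thesis using aa by simp
  qed
  have d2: "d \<le> 2 * N"
  proof -
    have "Mb * a \<le> Mb * (8 * L\<^sup>2 * d)" using ad Mb by (rule mult_left_mono)
    also have "\<dots> = (8 * L\<^sup>2 * Mb) * d" by simp
    also have "\<dots> \<le> (1/2) * d" using small d0 by (rule mult_right_mono)
    finally show ?thesis using dN by simp
  qed
  have a16: "a \<le> 16 * L\<^sup>2 * N"
  proof -
    have "8 * L\<^sup>2 * d \<le> 8 * L\<^sup>2 * (2 * N)" by (rule mult_left_mono[OF d2]) simp
    also have "8 * L\<^sup>2 * (2 * N) = 16 * L\<^sup>2 * N" by simp
    finally show ?thesis using ad by (rule order_trans[rotated])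
  qed
  show "a \<le> 16 * L\<^sup>2 * N" using a16 .
  have G32: "G \<le> (6 * L * N)\<^sup>2"
  proof -
    have "G \<le> a * d" by (rule Gad)
    also have "\<dots> \<le> (16 * L\<^sup>2 * N) * (2 * N)" using a16 d2 a0 d0 by (intro mult_mono) auto
    also have "\<dots> = 32 * (L * N)\<^sup>2" by (simp add: power2_eq_square)
    also have "\<dots> \<le> 36 * (L * N)\<^sup>2" by simp
    also have "\<dots> = (6 * L * N)\<^sup>2" by (simp add: power2_eq_square)
    finally show ?thesis .
  qed
  have sG: "sqrt G \<le> 6 * L * N"
    using G32 L N0 by (simp add: real_le_lsqrt real_sqrt_le_iff)
  have Hd: "(\<Sum>b\<in>Basis. \<Sum>b'\<in>Basis. ip lborel (?r (g2 b b')) (?r (g2 b b'))) = d\<^sup>2"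
  proof -
    have "(\<Sum>b\<in>Basis. \<Sum>b'\<in>Basis. ip lborel (?r (g2 b b)) (?r (g2 b' b'))) = (\<Sum>b\<in>Basis. ip lborel (?r (g2 b b)) \<Delta>)"
      unfolding \<Delta>_def[abs_def] by (intro sum.cong refl, subst ip_sum_right) (auto intro: L2')
    also have "\<dots> = ip lborel \<Delta> \<Delta>"
    proof -
      have D\<Delta>: "\<Delta> = (\<lambda>p. \<Sum>b\<in>Basis. ?r (g2 b b) p)" by (rule ext) (simp add: \<Delta>_def)
      have "ip lborel (\<lambda>p. \<Sum>b\<in>Basis. ?r (g2 b b) p) \<Delta> = (\<Sum>b\<in>Basis. ip lborel (?r (g2 b b)) \<Delta>)"
        by (rule ip_sum_left) (auto intro: L2' L\<Delta>)
      then show ?thesis unfolding D\<Delta>[symmetric] by simp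
    qed
    finally show ?thesis using I(2) unfolding d_def by (simp add: nrm_sq)
  qed
  have sob0: "sob2_norm ?\<Omega> \<psi> g1 g2 = a + sqrt G
      + sqrt (\<Sum>b\<in>Basis. \<Sum>b'\<in>Basis. ip lborel (?r (g2 b b')) (?r (g2 b b')))"
    unfolding a_def G_def by (rule sob_eq[OF s\<psi> s1 s2])
  have sob: "sob2_norm ?\<Omega> \<psi> g1 g2 = a + sqrt G + d"
    using sob0 Hd d0 by simp
  have "a + sqrt G + d \<le> 16 * L\<^sup>2 * N + 6 * L * N + 2 * N" using a16 sG d2 by simp
  also have "\<dots> \<le> 9 * N"
  proof -
    have "L\<^sup>2 \<le> (1/4)\<^sup>2" by (rule power_mono[OF Lq]) (use L in simp)
    then have "16 * L\<^sup>2 \<le> 1" by (simp add: power2_eq_square)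
    then have h1: "16 * L\<^sup>2 * N \<le> 1 * N" using N0 by (rule mult_right_mono)
    have "6 * L \<le> 2" using Lq by simp
    then have h2: "(6 * L) * N \<le> 2 * N" using N0 by (rule mult_right_mono)
    show ?thesis using h1 h2 N0 by linarith
  qed
  finally show "sob2_norm ?\<Omega> \<psi> g1 g2 \<le> 9 * N" using sob by simp
qed


lemma L0_props:
  fixes Mb L :: real
  assumes Mb: "Mb \<ge> 0" and L: "0 < L" "L < 1 / (4 * (Mb + 1))"
  shows "L \<le> 1/4" and "8 * L\<^sup>2 * Mb \<le> 1/2"
proof -
  have pos: "4 * (Mb + 1) > 0" using Mb by simp
  have x: "4 * (Mb + 1) * L < 1" using L(2) pos by (simp add: pos_less_divide_eq mult.commute)
  have "L * 4 \<le> 4 * (Mb + 1) * L" using Mb L(1) by (simp add: algebra_simps)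
  then show "L \<le> 1/4" using x by simp
  have "(4 * (Mb + 1) * L)\<^sup>2 \<le> 1" using x L(1) Mb by (intro power_le_one) auto
  moreover have "(4 * (Mb + 1) * L)\<^sup>2 = 16 * ((Mb + 1)\<^sup>2 * L\<^sup>2)" by (simp add: power2_eq_square algebra_simps)
  ultimately have y: "16 * ((Mb + 1)\<^sup>2 * L\<^sup>2) \<le> 1" by simp
  have "Mb \<le> (Mb + 1)\<^sup>2" using Mb by (simp add: power2_eq_square algebra_simps)
  then have "Mb * L\<^sup>2 \<le> (Mb + 1)\<^sup>2 * L\<^sup>2" by (rule mult_right_mono) simp
  then show "8 * L\<^sup>2 * Mb \<le> 1/2" using y by (simp add: algebra_simps)
qed

theorem proposition3p3:
  fixes R cV :: real and V :: "real \<Rightarrow> real" and \<phi>bar :: "real \<times> real \<Rightarrow> real"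
  assumes "R > 0"
    and "cV > 0"
    and "smooth_on UNIV V"
    and "\<forall>t. t * deriv V t \<ge> - cV\<^sup>2"
    and "\<forall>t. deriv (deriv V) t \<ge> - cV\<^sup>2"
    and "smooth_on (ball 0 R) \<phi>bar"
    and "bounded (\<phi>bar ` ball 0 R)"
  shows "\<exists>L0>0. \<exists>c>0. \<forall>L. 0 < L \<and> L < L0 \<longrightarrow>
           (\<forall>\<psi> g1 g2. in_H R L \<psi> g1 g2 \<longrightarrow>
              (AE p in lborel. p \<in> dom_X R L \<longrightarrow> Lop V \<phi>bar \<psi> g2 p = 0)
              \<longrightarrow> (AE p in lborel. p \<in> dom_X R L \<longrightarrow> \<psi> p = 0))
         \<and> (\<forall>\<psi> g1 g2. in_H R L \<psi> g1 g2 \<longrightarrow>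
              sob2_norm (dom_X R L) \<psi> g1 g2 \<le> c * L2norm (dom_X R L) (Lop V \<phi>bar \<psi> g2))"
proof -
  obtain Mb where Mb: "Mb \<ge> 0" and Wb: "\<forall>x\<in>ball 0 R. \<bar>deriv (deriv V) (\<phi>bar x)\<bar> \<le> Mb"
    using Wbound[OF assms(3) assms(7)] by blast
  define L0 where "L0 = 1 / (4 * (Mb + 1))"
  have L0: "L0 > 0" using Mb by (simp add: L0_def)
  have main: "(\<forall>\<psi> g1 g2. in_H R L \<psi> g1 g2 \<longrightarrow>
              (AE p in lborel. p \<in> dom_X R L \<longrightarrow> Lop V \<phi>bar \<psi> g2 p = 0)
              \<longrightarrow> (AE p in lborel. p \<in> dom_X R L \<longrightarrow> \<psi> p = 0))
         \<and> (\<forall>\<psi> g1 g2. in_H R L \<psi> g1 g2 \<longrightarrow>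
              sob2_norm (dom_X R L) \<psi> g1 g2 \<le> 9 * L2norm (dom_X R L) (Lop V \<phi>bar \<psi> g2))"
    if L: "0 < L" "L < L0" for L
  proof -
    have Lq: "L \<le> 1/4" and small: "8 * L\<^sup>2 * Mb \<le> 1/2"
      using L0_props[OF Mb L(1)] L(2) unfolding L0_def by auto
    have Wm: "(\<lambda>q. indicator (dom_X R L) q * deriv (deriv V) (\<phi>bar (fst q))) \<in> borel_measurable lborel"
      by (rule Wmeas[OF assms(3) assms(6)])
    note CE = core_est[OF assms(1) L(1) Mb Wb Wm small Lq]
    show ?thesis
    proof (intro conjI allI impI)
      fix \<psi> g1 g2 assume H: "in_H R L \<psi> g1 g2"
      show "sob2_norm (dom_X R L) \<psi> g1 g2 \<le> 9 * L2norm (dom_X R L) (Lop V \<phi>bar \<psi> g2)"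
        by (rule CE(1)[OF H])
    next
      fix \<psi> g1 g2 assume H: "in_H R L \<psi> g1 g2"
        and Z: "AE p in lborel. p \<in> dom_X R L \<longrightarrow> Lop V \<phi>bar \<psi> g2 p = 0"
      let ?\<Omega> = "dom_X R L"
      have s\<psi>: "sqint ?\<Omega> \<psi>" using H unfolding in_H_def weak_derivs_def by blast
      have L\<psi>: "L2 lborel (rs ?\<Omega> \<psi>)" using sqint_L2[OF s\<psi>] .
      have "(LINT p:?\<Omega>|lborel. (Lop V \<phi>bar \<psi> g2 p)\<^sup>2) = 0"
        unfolding set_lebesgue_integral_def
        by (rule integral_eq_zero_AE) (use Z in \<open>auto elim!: AE_mp\<close>)
      then have N0: "L2norm ?\<Omega> (Lop V \<phi>bar \<psi> g2) = 0" by (simp add: L2norm_def)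
      have "nrm lborel (rs ?\<Omega> \<psi>) \<le> 0" using CE(2)[OF H] N0 by simp
      then have "nrm lborel (rs ?\<Omega> \<psi>) = 0" using nrm_nonneg[of lborel "rs ?\<Omega> \<psi>"] by linarith
      then have "ip lborel (rs ?\<Omega> \<psi>) (rs ?\<Omega> \<psi>) = 0" using nrm_sq[of lborel "rs ?\<Omega> \<psi>"] by simp
      then have "(\<integral>p. rs ?\<Omega> \<psi> p * rs ?\<Omega> \<psi> p \<partial>lborel) = 0" by (simp add: ip_def)
      then have "AE p in lborel. rs ?\<Omega> \<psi> p * rs ?\<Omega> \<psi> p = 0"
        using integral_nonneg_eq_0_iff_AE[OF L2_prod_int[OF L\<psi> L\<psi>]] by simp
      then show "AE p in lborel. p \<in> ?\<Omega> \<longrightarrow> \<psi> p = 0"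
        by (rule AE_mp) (auto simp: rs_def)
    qed
  qed
  show ?thesis
    by (rule exI[of _ L0], rule conjI[OF L0], rule exI[of _ 9], simp, intro allI impI, elim conjE)
       (rule main; assumption)
qed


end
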